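(* Let $r,s\ge 0$, let $\Delta=(v_1,\dots,v_n)$ be a collection of vectors in $\mathbb{Z}^2\setminus\{0\}$, let $F\subset\{1,\dots,n\}$ with $r+2s+|F|=|\Delta|-1$, and let $\mathcal{P}$ be a collection of conditions in general position for $\mathrm{ev}_F$. Then the forgetful map $\mathrm{ft}:\mathcal{M}^{or}_{(r,s)}(\Delta,F)\to\mathcal{M}_{(r,s)}(\Delta)$ (forgetting orientations) restricts to a bijection between the oriented refined broccoli curves in $\mathcal{M}^{or}_{(r,s)}(\Delta,F)$ with $\mathrm{ev}_F(C)=\mathcal{P}$ and the unoriented refined broccoli curves in $\mathcal{M}_{(r,s)}(\Delta)$ with $\mathrm{ev}_F(C)=\mathcal{P}$.
   Context: Curves. An $(r,s)$-marked curve of degree $\Delta$ is $C=(\Gamma,h,x_1,\dots,x_{r+s})$ with $\Gamma$ a metric graph whose components are trees, $h:\Gamma\to\mathbb{R}^2$ continuous, affine with integral direction vectors on edges, balanced at vertices; $x_1,\dots,x_r$ (real) and $x_{r+1},\dots,x_{r+s}$ (complex) are contracted unbounded edges (markings), the other unbounded edges $y_1,\dots,y_n$ (labeled ends) have outward direction vectors $\Delta=(v(y_1),\dots,v(y_n))$. $\mathcal{M}_{(r,s)}(\Delta)$ is the polyhedral complex of isomorphism classes of connected such curves (cells = combinatorial types). An oriented curve carries an orientation of every non-contracted edge; its set of fixed ends is $F=\{i:y_i\text{ oriented inwards}\}$; $\mathcal{M}^{or}_{(r,s)}(\Delta,F)$ is the set of connected oriented curves with set of fixed ends $F$. $\mathrm{ev}_F(C)=(h(x_1),\dots,h(x_{r+s}),(h(y_i))_{i\in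 F})\in(\mathbb{R}^2)^{r+s}\times\prod_{i\in F}\mathbb{R}^2/\langle v(y_i)\rangle$; $\mathcal P$ is in general position for $\mathrm{ev}_F$ (on $\mathcal{M}_{(r,s)}(\Delta)$) if it avoids the images of all cells whose image has dimension $<2(r+s)+|F|$. Oriented refined broccoli curve: an oriented curve each of whose vertices is (I) adjacent to a real marking and exactly two non-contracted edges, both outgoing; (II) unmarked, 3-valent, with two incoming and one outgoing edge; or (III) adjacent to a complex marking and exactly three non-contracted edges, all outgoing (edges of any parity). Unoriented refined broccoli curve: a curve in $\mathcal{M}_{(r,s)}(\Delta)$ each of whose vertices is (I') 3-valent in $\Gamma$ and adjacent to a real marking, (II') 3-valent without marking, or (III') 4-valent in $\Gamma$ and adjacent to a complex marking. *)

theory Defs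
  imports "HOL-Analysis.Analysis"
begin

text \<open>
  A curve C = (Gamma, h, x_1, ..., x_{r+s}) is encoded by
  \<^item> a finite nonempty set of vertices c_verts (natural numbers),
  \<^item> a finite set of bounded edges c_edges (natural numbers), each with two endpoints
    c_src e, c_tgt e, a length c_len e > 0 and an integral direction vector c_dir e
    (the slope of h on e, read from c_src e towards c_tgt e; the orientation src/tgt is
    only bookkeeping and carries no meaning),
  \<^item> the image c_pos v in R^2 of each vertex v,
  \<^item> for each marking i in {1..r+s} the vertex c_mark i it is attached to
    (markings are contracted ends; i \<le> r real, r < i \<le> r+s complex),
  \<^item> for each labelled end y_j, j in {1..n}, the vertex c_endv j it is attached to;
    its outward direction is v_j = the j-th entry of Delta.
  h is then determined (affine on edges, constant on markings, ray of direction v_j on y_j).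
\<close>

record curve =
  c_verts :: "nat set"
  c_edges :: "nat set"
  c_src   :: "nat \<Rightarrow> nat"
  c_tgt   :: "nat \<Rightarrow> nat"
  c_len   :: "nat \<Rightarrow> real"
  c_dir   :: "nat \<Rightarrow> int \<times> int"
  c_pos   :: "nat \<Rightarrow> real \<times> real"
  c_mark  :: "nat \<Rightarrow> nat"
  c_endv  :: "nat \<Rightarrow> nat"

text \<open>The j-th vector of Delta (1-based), as in the paper.\<close>
definition vvec :: "(int \<times> int) list \<Rightarrow> nat \<Rightarrow> int \<times> int" where
  "vvec \<Delta> j = \<Delta> ! (j - 1)"

definition rvec :: "int \<times> int \<Rightarrow> real \<times> real" where
  "rvec u = (real_of_int (fst u), real_of_int (snd u))"

definition ends_at :: "(int \<times> int) list \<Rightarrow> curve \<Rightarrow> nat \<Rightarrow> nat set" where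
  "ends_at \<Delta> C v = {j \<in> {1..length \<Delta>}. c_endv C j = v}"

definition marks_at :: "nat \<Rightarrow> nat \<Rightarrow> curve \<Rightarrow> nat \<Rightarrow> nat set" where
  "marks_at r s C v = {i \<in> {1..r+s}. c_mark C i = v}"

definition edges_at :: "curve \<Rightarrow> nat \<Rightarrow> nat set" where
  "edges_at C v = {e \<in> c_edges C. c_src C e = v \<or> c_tgt C e = v}"

definition valence :: "nat \<Rightarrow> nat \<Rightarrow> (int \<times> int) list \<Rightarrow> curve \<Rightarrow> nat \<Rightarrow> nat" where
  "valence r s \<Delta> C v = card (edges_at C v) + card (marks_at r s C v) + card (ends_at \<Delta> C v)"

definition adj_rel :: "curve \<Rightarrow> (nat \<times> nat) set" where
  "adj_rel C = {(c_src C e, c_tgt C e) | e. e \<in> c_edges C} \<union> {(c_tgt C e, c_src C e) | e. e \<in> c_edges C}"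

text \<open>C is a (representative of a point of) M_(r,s)(Delta): a connected curve whose graph
  is a tree, with positive edge lengths, h affine with integral slopes on edges,
  balanced at every vertex, and no vertices of valence < 3.\<close>
definition is_curve :: "nat \<Rightarrow> nat \<Rightarrow> (int \<times> int) list \<Rightarrow> curve \<Rightarrow> bool" where
  "is_curve r s \<Delta> C \<longleftrightarrow>
     finite (c_verts C) \<and> c_verts C \<noteq> {} \<and> finite (c_edges C) \<and>
     (\<forall>e \<in> c_edges C. c_src C e \<in> c_verts C \<and> c_tgt C e \<in> c_verts C \<and>
        c_src C e \<noteq> c_tgt C e \<and> c_len C e > 0 \<and>
        c_pos C (c_tgt C e) - c_pos C (c_src C e) = c_len C e *\<^sub>R rvec (c_dir C e)) \<and>
     (\<forall>i \<in> {1..r+s}. c_mark C i \<in> c_verts C) \<and>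
     (\<forall>j \<in> {1..length \<Delta>}. c_endv C j \<in> c_verts C) \<and>
     (\<forall>u \<in> c_verts C. \<forall>w \<in> c_verts C. (u, w) \<in> (adj_rel C)\<^sup>*) \<and>
     card (c_edges C) + 1 = card (c_verts C) \<and>
     (\<forall>v \<in> c_verts C.
        (\<Sum>e \<in> {e \<in> c_edges C. c_src C e = v}. c_dir C e)
        - (\<Sum>e \<in> {e \<in> c_edges C. c_tgt C e = v}. c_dir C e)
        + (\<Sum>j \<in> ends_at \<Delta> C v. vvec \<Delta> j) = 0) \<and>
     (\<forall>v \<in> c_verts C. valence r s \<Delta> C v \<ge> 3)"

text \<open>Bijections phi (vertices), psi (bounded edges) identifying the underlying labelled
  graphs of C and D together with the slopes of h (an edge may be traversed in
  the opposite sense, then the slope is negated).\<close>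
definition graph_match ::
  "nat \<Rightarrow> nat \<Rightarrow> (int \<times> int) list \<Rightarrow> curve \<Rightarrow> curve \<Rightarrow> (nat \<Rightarrow> nat) \<Rightarrow> (nat \<Rightarrow> nat) \<Rightarrow> bool" where
  "graph_match r s \<Delta> C D \<phi> \<psi> \<longleftrightarrow>
     bij_betw \<phi> (c_verts C) (c_verts D) \<and> bij_betw \<psi> (c_edges C) (c_edges D) \<and>
     (\<forall>e \<in> c_edges C.
        (c_src D (\<psi> e) = \<phi> (c_src C e) \<and> c_tgt D (\<psi> e) = \<phi> (c_tgt C e) \<and>
         c_dir D (\<psi> e) = c_dir C e) \<or>
        (c_src D (\<psi> e) = \<phi> (c_tgt C e) \<and> c_tgt D (\<psi> e) = \<phi> (c_src C e) \<and>
         c_dir D (\<psi> e) = - c_dir C e)) \<and>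
     (\<forall>i \<in> {1..r+s}. c_mark D i = \<phi> (c_mark C i)) \<and>
     (\<forall>j \<in> {1..length \<Delta>}. c_endv D j = \<phi> (c_endv C j))"

text \<open>Isomorphism of curves (equality in M_(r,s)(Delta)).\<close>
definition curve_iso :: "nat \<Rightarrow> nat \<Rightarrow> (int \<times> int) list \<Rightarrow> curve \<Rightarrow> curve \<Rightarrow> bool" where
  "curve_iso r s \<Delta> C D \<longleftrightarrow>
     (\<exists>\<phi> \<psi>. graph_match r s \<Delta> C D \<phi> \<psi> \<and>
        (\<forall>e \<in> c_edges C. c_len D (\<psi> e) = c_len C e) \<and>
        (\<forall>v \<in> c_verts C. c_pos D (\<phi> v) = c_pos C v))"

definition same_type :: "nat \<Rightarrow> nat \<Rightarrow> (int \<times> int) list \<Rightarrow> curve \<Rightarrow> curve \<Rightarrow> bool" where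
  "same_type r s \<Delta> C D \<longleftrightarrow> (\<exists>\<phi> \<psi>. graph_match r s \<Delta> C D \<phi> \<psi>)"

definition cell :: "nat \<Rightarrow> nat \<Rightarrow> (int \<times> int) list \<Rightarrow> curve \<Rightarrow> curve set" where
  "cell r s \<Delta> C = {D. is_curve r s \<Delta> D \<and> same_type r s \<Delta> C D}"

text \<open>Conditions P = (Pm, Pf): points Pm i in R^2 for the markings, and for j in F a class in
  R^2 / <v_j>, represented by a point Pf j in R^2.\<close>
definition ev_eq ::
  "nat \<Rightarrow> nat \<Rightarrow> (int \<times> int) list \<Rightarrow> nat set \<Rightarrow> curve \<Rightarrow>
   (nat \<Rightarrow> real \<times> real) \<times> (nat \<Rightarrow> real \<times> real) \<Rightarrow> bool" where
  "ev_eq r s \<Delta> F C P \<longleftrightarrow>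
     (\<forall>i \<in> {1..r+s}. c_pos C (c_mark C i) = fst P i) \<and>
     (\<forall>j \<in> F. \<exists>t::real. c_pos C (c_endv C j) - snd P j = t *\<^sub>R rvec (vvec \<Delta> j))"

text \<open>Coordinates of ev_F(C) in R^(2(r+s)+|F|); the factor R^2/<v> (v \<noteq> 0) is identified
  with R via the linear isomorphism induced by p \<mapsto> det(v,p).\<close>
definition det2 :: "int \<times> int \<Rightarrow> real \<times> real \<Rightarrow> real" where
  "det2 v p = real_of_int (fst v) * snd p - real_of_int (snd v) * fst p"

definition ev_coords :: "nat \<Rightarrow> nat \<Rightarrow> (int \<times> int) list \<Rightarrow> nat set \<Rightarrow> curve \<Rightarrow> real list" where
  "ev_coords r s \<Delta> F C =
     concat (map (\<lambda>i. [fst (c_pos C (c_mark C i)), snd (c_pos C (c_mark C i))]) [1..<r+s+1])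
     @ map (\<lambda>j. det2 (vvec \<Delta> j) (c_pos C (c_endv C j))) (sorted_list_of_set F)"

definition aff_indep :: "nat \<Rightarrow> real list list \<Rightarrow> bool" where
  "aff_indep N ps \<longleftrightarrow>
     (\<forall>c :: nat \<Rightarrow> real.
        (\<Sum>i < length ps. c i) = 0 \<and> (\<forall>k < N. (\<Sum>i < length ps. c i * (ps ! i) ! k) = 0)
        \<longrightarrow> (\<forall>i < length ps. c i = 0))"

definition dim_ge :: "nat \<Rightarrow> real list set \<Rightarrow> nat \<Rightarrow> bool" where
  "dim_ge N S d \<longleftrightarrow> (\<exists>ps. length ps = Suc d \<and> set ps \<subseteq> S \<and> aff_indep N ps)"

definition gen_pos ::
  "nat \<Rightarrow> nat \<Rightarrow> (int \<times> int) list \<Rightarrow> nat set \<Rightarrow>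
   (nat \<Rightarrow> real \<times> real) \<times> (nat \<Rightarrow> real \<times> real) \<Rightarrow> bool" where
  "gen_pos r s \<Delta> F P \<longleftrightarrow>
     (\<forall>C. is_curve r s \<Delta> C \<and>
          \<not> dim_ge (2*(r+s) + card F) (ev_coords r s \<Delta> F ` cell r s \<Delta> C) (2*(r+s) + card F)
          \<longrightarrow> \<not> ev_eq r s \<Delta> F C P)"

text \<open>An orientation is a pair (eo, io): for a non-contracted bounded edge e, eo e = True means
  e is oriented from c_src e to c_tgt e; for a labelled end y_j, io j = True means y_j is
  oriented inwards (towards its vertex). Values on contracted edges are irrelevant.\<close>
type_synonym orientation = "(nat \<Rightarrow> bool) \<times> (nat \<Rightarrow> bool)"

definition e_head :: "curve \<Rightarrow> orientation \<Rightarrow> nat \<Rightarrow> nat" where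
  "e_head C ori e = (if fst ori e then c_tgt C e else c_src C e)"

definition e_tail :: "curve \<Rightarrow> orientation \<Rightarrow> nat \<Rightarrow> nat" where
  "e_tail C ori e = (if fst ori e then c_src C e else c_tgt C e)"

definition fixed_ends :: "(int \<times> int) list \<Rightarrow> orientation \<Rightarrow> nat set" where
  "fixed_ends \<Delta> ori = {j \<in> {1..length \<Delta>}. snd ori j}"

definition or_iso ::
  "nat \<Rightarrow> nat \<Rightarrow> (int \<times> int) list \<Rightarrow> curve \<Rightarrow> orientation \<Rightarrow> curve \<Rightarrow> orientation \<Rightarrow> bool" where
  "or_iso r s \<Delta> C ori D ori' \<longleftrightarrow>
     (\<exists>\<phi> \<psi>. graph_match r s \<Delta> C D \<phi> \<psi> \<and>
        (\<forall>e \<in> c_edges C. c_len D (\<psi> e) = c_len C e) \<and>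
        (\<forall>v \<in> c_verts C. c_pos D (\<phi> v) = c_pos C v) \<and>
        (\<forall>e \<in> c_edges C. c_dir C e \<noteq> 0 \<longrightarrow> e_head D ori' (\<psi> e) = \<phi> (e_head C ori e)) \<and>
        (\<forall>j \<in> {1..length \<Delta>}. snd ori' j = snd ori j))"

definition nc_edges_at :: "curve \<Rightarrow> nat \<Rightarrow> nat set" where
  "nc_edges_at C v = {e \<in> edges_at C v. c_dir C e \<noteq> 0}"

text \<open>Number of non-contracted edges at v (labelled ends are never contracted as v_j \<noteq> 0).\<close>
definition num_nc :: "(int \<times> int) list \<Rightarrow> curve \<Rightarrow> nat \<Rightarrow> nat" where
  "num_nc \<Delta> C v = card (nc_edges_at C v) + card (ends_at \<Delta> C v)"

definition num_in :: "(int \<times> int) list \<Rightarrow> curve \<Rightarrow> orientation \<Rightarrow> nat \<Rightarrow> nat" where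
  "num_in \<Delta> C ori v = card {e \<in> nc_edges_at C v. e_head C ori e = v} + card {j \<in> ends_at \<Delta> C v. snd ori j}"

definition num_out :: "(int \<times> int) list \<Rightarrow> curve \<Rightarrow> orientation \<Rightarrow> nat \<Rightarrow> nat" where
  "num_out \<Delta> C ori v = card {e \<in> nc_edges_at C v. e_tail C ori e = v} + card {j \<in> ends_at \<Delta> C v. \<not> snd ori j}"

definition all_outgoing :: "(int \<times> int) list \<Rightarrow> curve \<Rightarrow> orientation \<Rightarrow> nat \<Rightarrow> bool" where
  "all_outgoing \<Delta> C ori v \<longleftrightarrow>
     (\<forall>e \<in> nc_edges_at C v. e_tail C ori e = v) \<and> (\<forall>j \<in> ends_at \<Delta> C v. \<not> snd ori j)"

definition oriented_broccoli ::
  "nat \<Rightarrow> nat \<Rightarrow> (int \<times> int) list \<Rightarrow> curve \<Rightarrow> orientation \<Rightarrow> bool" where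
  "oriented_broccoli r s \<Delta> C ori \<longleftrightarrow>
     (\<forall>v \<in> c_verts C.
        \<comment> \<open>(I)\<close>
        ((\<exists>i \<in> {1..r}. c_mark C i = v) \<and> num_nc \<Delta> C v = 2 \<and> all_outgoing \<Delta> C ori v) \<or>
        \<comment> \<open>(II)\<close>
        (marks_at r s C v = {} \<and> valence r s \<Delta> C v = 3 \<and>
           num_in \<Delta> C ori v = 2 \<and> num_out \<Delta> C ori v = 1) \<or>
        \<comment> \<open>(III)\<close>
        ((\<exists>i \<in> {r+1..r+s}. c_mark C i = v) \<and> num_nc \<Delta> C v = 3 \<and> all_outgoing \<Delta> C ori v))"

definition unoriented_broccoli :: "nat \<Rightarrow> nat \<Rightarrow> (int \<times> int) list \<Rightarrow> curve \<Rightarrow> bool" where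
  "unoriented_broccoli r s \<Delta> C \<longleftrightarrow>
     (\<forall>v \<in> c_verts C.
        \<comment> \<open>(I')\<close>
        (valence r s \<Delta> C v = 3 \<and> (\<exists>i \<in> {1..r}. c_mark C i = v)) \<or>
        \<comment> \<open>(II')\<close>
        (valence r s \<Delta> C v = 3 \<and> marks_at r s C v = {}) \<or>
        \<comment> \<open>(III')\<close>
        (valence r s \<Delta> C v = 4 \<and> (\<exists>i \<in> {r+1..r+s}. c_mark C i = v)))"

definition OrBroc ::
  "nat \<Rightarrow> nat \<Rightarrow> (int \<times> int) list \<Rightarrow> nat set \<Rightarrow>
   (nat \<Rightarrow> real \<times> real) \<times> (nat \<Rightarrow> real \<times> real) \<Rightarrow> curve \<Rightarrow> orientation \<Rightarrow> bool" where
  "OrBroc r s \<Delta> F P C ori \<longleftrightarrow>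
     is_curve r s \<Delta> C \<and> fixed_ends \<Delta> ori = F \<and> oriented_broccoli r s \<Delta> C ori \<and> ev_eq r s \<Delta> F C P"

definition UnBroc ::
  "nat \<Rightarrow> nat \<Rightarrow> (int \<times> int) list \<Rightarrow> nat set \<Rightarrow>
   (nat \<Rightarrow> real \<times> real) \<times> (nat \<Rightarrow> real \<times> real) \<Rightarrow> curve \<Rightarrow> bool" where
  "UnBroc r s \<Delta> F P C \<longleftrightarrow>
     is_curve r s \<Delta> C \<and> unoriented_broccoli r s \<Delta> C \<and> ev_eq r s \<Delta> F C P"

end

theory Submission
  imports Defs
begin


lemma lin_alg_exists:
  fixes A :: "nat \<Rightarrow> nat \<Rightarrow> real"
  assumes "finite J" "finite I" "card J < card I"
  shows "\<exists>c. (\<exists>i\<in>I. c i \<noteq> 0) \<and> (\<forall>j\<in>J. (\<Sum>i\<in>I. A j i * c i) = 0)"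
  using assms
proof (induction J arbitrary: I A rule: finite_induct)
  case empty
  then have "I \<noteq> {}" by auto
  then show ?case by (rule_tac x="\<lambda>_. 1" in exI) auto
next
  case (insert j J)
  show ?case
  proof (cases "\<forall>i\<in>I. A j i = 0")
    case True
    from insert.IH[of I A] insert.prems insert.hyps obtain c where
      c: "\<exists>i\<in>I. c i \<noteq> 0" "\<forall>j\<in>J. (\<Sum>i\<in>I. A j i * c i) = 0" by auto
    show ?thesis using c True by (rule_tac x=c in exI) auto
  next
    case False
    then obtain i0 where i0: "i0 \<in> I" "A j i0 \<noteq> 0" by auto
    define A' where "A' = (\<lambda>j' i. A j' i - A j' i0 * A j i / A j i0)"
    have cI: "card (I - {i0}) = card I - 1" using i0 insert.prems by auto
    have "card J < card (I - {i0})" using cI insert.prems insert.hyps by auto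
    from insert.IH[OF insert.prems(1)[THEN finite_Diff] this, of A'] obtain c' where
      c': "\<exists>i\<in>I-{i0}. c' i \<noteq> 0" "\<forall>j'\<in>J. (\<Sum>i\<in>I-{i0}. A' j' i * c' i) = 0"
      using insert.prems by auto
    define z where "z = (\<Sum>i\<in>I-{i0}. A j i * c' i)"
    define c where "c = c'(i0 := - z / A j i0)"
    have split: "(\<Sum>i\<in>I. B i * c i) = B i0 * c i0 + (\<Sum>i\<in>I-{i0}. B i * c' i)" for B
    proof -
      have "(\<Sum>i\<in>I. B i * c i) = B i0 * c i0 + (\<Sum>i\<in>I-{i0}. B i * c i)"
        using i0 insert.prems by (simp add: sum.remove)
      also have "(\<Sum>i\<in>I-{i0}. B i * c i) = (\<Sum>i\<in>I-{i0}. B i * c' i)"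
        by (rule sum.cong) (auto simp: c_def)
      finally show ?thesis .
    qed
    have "\<exists>i\<in>I. c i \<noteq> 0" using c' by (auto simp: c_def)
    moreover have "(\<Sum>i\<in>I. A j i * c i) = 0"
      unfolding split using i0 by (simp add: c_def z_def)
    moreover have "(\<Sum>i\<in>I. A j' i * c i) = 0" if "j' \<in> J" for j'
    proof -
      have "0 = (\<Sum>i\<in>I-{i0}. A' j' i * c' i)" using c' that by auto
      also have "\<dots> = (\<Sum>i\<in>I-{i0}. A j' i * c' i) - A j' i0 / A j i0 * z"
        by (simp add: A'_def z_def algebra_simps sum_subtractf sum_distrib_left sum_divide_distrib)
      finally show ?thesis unfolding split using i0 by (simp add: c_def algebra_simps)
    qed
    ultimately show ?thesis by (rule_tac x=c in exI) auto
  qed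
qed

lemma hyperplane_not_dim:
  fixes a :: "nat \<Rightarrow> real"
  assumes k0: "k0 < N" "a k0 \<noteq> 0"
    and H: "\<forall>p\<in>S. (\<Sum>k<N. a k * p ! k) = 0"
  shows "\<not> dim_ge N S N"
proof
  assume "dim_ge N S N"
  then obtain ps where ps: "length ps = Suc N" "set ps \<subseteq> S" "aff_indep N ps"
    unfolding dim_ge_def by auto
  define J where "J = insert N ({..<N} - {k0})"
  define A where "A = (\<lambda>j i. if j = N then 1 else ps ! i ! j :: real)"
  have "card J = N" using k0 by (simp add: J_def)
  then have "card J < card {..<Suc N}" by simp
  from lin_alg_exists[OF _ _ this, of A] obtain c where
    c: "\<exists>i\<in>{..<Suc N}. c i \<noteq> 0" "\<forall>j\<in>J. (\<Sum>i<Suc N. A j i * c i) = 0"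
    by (auto simp: J_def)
  have s0: "(\<Sum>i<length ps. c i) = 0" using c(2) by (auto simp: J_def A_def ps(1))
  have sk: "(\<Sum>i<length ps. c i * (ps ! i) ! k) = 0" if "k < N" "k \<noteq> k0" for k
    using c(2) that by (auto simp: J_def A_def ps(1) mult.commute)
  have "(\<Sum>k<N. a k * (\<Sum>i<length ps. c i * (ps ! i) ! k)) = (\<Sum>i<length ps. c i * (\<Sum>k<N. a k * ps ! i ! k))"
    by (simp add: sum_distrib_left sum.swap[of _ "{..<N}"] algebra_simps)
  also have "\<dots> = 0"
  proof (rule sum.neutral, rule ballI)
    fix i assume "i \<in> {..<length ps}"
    then have "ps ! i \<in> S" using ps by auto
    then show "c i * (\<Sum>k<N. a k * ps ! i ! k) = 0" using H by auto
  qed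
  finally have "(\<Sum>k<N. a k * (\<Sum>i<length ps. c i * (ps ! i) ! k)) = 0" .
  moreover have "(\<Sum>k<N. a k * (\<Sum>i<length ps. c i * (ps ! i) ! k)) = a k0 * (\<Sum>i<length ps. c i * (ps ! i) ! k0)"
    using k0 by (subst sum.remove[of _ k0]) (auto simp: sk)
  ultimately have "(\<Sum>i<length ps. c i * (ps ! i) ! k0) = 0" using k0 by simp
  then have "\<forall>k<N. (\<Sum>i<length ps. c i * (ps ! i) ! k) = 0" using sk by metis
  with s0 ps(3) have "\<forall>i<length ps. c i = 0" unfolding aff_indep_def by blast
  with c(1) ps(1) show False by auto
qed


definition adjS :: "(nat \<Rightarrow> nat) \<Rightarrow> (nat \<Rightarrow> nat) \<Rightarrow> nat set \<Rightarrow> (nat \<times> nat) set" where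
  "adjS sr tg S = {(sr f, tg f) | f. f \<in> S} \<union> {(tg f, sr f) | f. f \<in> S}"

definition reach :: "(nat \<Rightarrow> nat) \<Rightarrow> (nat \<Rightarrow> nat) \<Rightarrow> nat set \<Rightarrow> nat \<Rightarrow> nat set" where
  "reach sr tg S x = {w. (x, w) \<in> (adjS sr tg S)\<^sup>*}"

lemma sym_adjS: "sym (adjS sr tg S)"
  unfolding adjS_def sym_def by blast

lemma rt_sym: "(a, b) \<in> (adjS sr tg S)\<^sup>* \<Longrightarrow> (b, a) \<in> (adjS sr tg S)\<^sup>*"
  using sym_rtrancl[OF sym_adjS] unfolding sym_def by blast

lemma reach_self[simp]: "x \<in> reach sr tg S x"
  by (simp add: reach_def)

lemma reach_trans: "y \<in> reach sr tg S x \<Longrightarrow> z \<in> reach sr tg S y \<Longrightarrow> z \<in> reach sr tg S x"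
  unfolding reach_def by auto

lemma reach_sym: "y \<in> reach sr tg S x \<Longrightarrow> x \<in> reach sr tg S y"
  unfolding reach_def by (auto intro: rt_sym)

lemma reach_eq: "y \<in> reach sr tg S x \<Longrightarrow> reach sr tg S y = reach sr tg S x"
  by (meson reach_sym reach_trans subsetI subset_antisym)

lemma reach_step: "y \<in> reach sr tg S x \<Longrightarrow> f \<in> S \<Longrightarrow> y = sr f \<or> y = tg f \<Longrightarrow>
   sr f \<in> reach sr tg S x \<and> tg f \<in> reach sr tg S x"
  unfolding reach_def adjS_def
  by (auto intro: rtrancl_into_rtrancl)

lemma reach_closed:
  assumes "y \<in> reach sr tg S x" "f \<in> S"
  shows "sr f \<in> reach sr tg S x \<longleftrightarrow> tg f \<in> reach sr tg S x"
  using reach_step[of _ sr tg S x f] assms by blast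

lemma reach_mono: "S \<subseteq> S' \<Longrightarrow> reach sr tg S x \<subseteq> reach sr tg S' x"
  unfolding reach_def adjS_def by (auto elim!: rtrancl_mono[THEN subsetD, rotated])

lemma reach_induct_set:
  assumes "y \<in> reach sr tg S x" "x \<in> R"
    and "\<And>f. f \<in> S \<Longrightarrow> sr f \<in> R \<longleftrightarrow> tg f \<in> R"
  shows "y \<in> R"
proof -
  have "(x, y) \<in> (adjS sr tg S)\<^sup>*" using assms(1) by (simp add: reach_def)
  then show ?thesis
  proof (induction rule: rtrancl_induct)
    case base then show ?case using assms(2) .
  next
    case (step y z) then show ?case using assms(3) unfolding adjS_def by auto
  qed
qed

lemma reach_subset:
  assumes "x \<in> V" "\<forall>f\<in>S. sr f \<in> V \<and> tg f \<in> V"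
  shows "reach sr tg S x \<subseteq> V"
proof -
  have "y \<in> reach sr tg S x \<Longrightarrow> y \<in> insert x (sr ` S \<union> tg ` S)" for y
    using reach_induct_set[of y sr tg S x "insert x (sr ` S \<union> tg ` S)"] by auto
  moreover have "insert x (sr ` S \<union> tg ` S) \<subseteq> V" using assms by auto
  ultimately show ?thesis by blast
qed

lemma reach_finite:
  assumes "finite S" shows "finite (reach sr tg S x)"
proof -
  have "y \<in> reach sr tg S x \<Longrightarrow> y \<in> insert x (sr ` S \<union> tg ` S)" for y
    using reach_induct_set[of y sr tg S x "insert x (sr ` S \<union> tg ` S)"] by auto
  then show ?thesis using assms by (meson finite_Un finite_imageI finite_insert finite_subset subsetI)
qed

lemma reach_insert_edge:
  assumes "a \<in> reach sr tg S x" "{a, b} = {sr g, tg g}"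
  shows "reach sr tg (insert g S) x = reach sr tg S x \<union> reach sr tg S b"
proof
  show "reach sr tg (insert g S) x \<subseteq> reach sr tg S x \<union> reach sr tg S b"
  proof
    fix y assume "y \<in> reach sr tg (insert g S) x"
    then show "y \<in> reach sr tg S x \<union> reach sr tg S b"
    proof (rule reach_induct_set)
      show "x \<in> reach sr tg S x \<union> reach sr tg S b" by simp
      fix f assume f: "f \<in> insert g S"
      show "sr f \<in> reach sr tg S x \<union> reach sr tg S b \<longleftrightarrow> tg f \<in> reach sr tg S x \<union> reach sr tg S b"
      proof (cases "f = g")
        case True
        have "a \<in> reach sr tg S x \<union> reach sr tg S b" "b \<in> reach sr tg S x \<union> reach sr tg S b"
          using assms by auto
        then show ?thesis using assms(2) True by (metis doubleton_eq_iff)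
      next
        case False
        then have "f \<in> S" using f by auto
        then show ?thesis using reach_closed[of _ sr tg S] by blast
      qed
    qed
  qed
next
  have sub: "S \<subseteq> insert g S" by auto
  have "b \<in> reach sr tg (insert g S) x"
  proof -
    have "a \<in> reach sr tg (insert g S) x" using reach_mono[OF sub] assms(1) by auto
    moreover have "a = sr g \<or> a = tg g" "b = sr g \<or> b = tg g" using assms(2) by (auto simp: doubleton_eq_iff)
    ultimately show ?thesis using reach_step[of a sr tg "insert g S" x g] by auto
  qed
  then show "reach sr tg S x \<union> reach sr tg S b \<subseteq> reach sr tg (insert g S) x"
    using reach_mono[OF sub] reach_trans by blast
qed

lemma reach_disj:
  assumes "reach sr tg S x \<inter> reach sr tg S y \<noteq> {}"
  shows "reach sr tg S x = reach sr tg S y"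
  using assms reach_eq by blast

lemma reach_card_le:
  assumes "finite S"
  shows "card (reach sr tg S x) \<le> card {f\<in>S. sr f \<in> reach sr tg S x} + 1"
  using assms
proof (induction S arbitrary: x rule: finite_induct)
  case empty
  have "reach sr tg {} x = {x}" unfolding reach_def adjS_def by auto
  then show ?case by simp
next
  case (insert g S)
  let ?R = "reach sr tg S x"
  let ?R' = "reach sr tg (insert g S) x"
  show ?case
  proof (cases "sr g \<in> ?R \<or> tg g \<in> ?R")
    case False
    have "?R' \<subseteq> ?R"
    proof
      fix y assume "y \<in> ?R'"
      then show "y \<in> ?R"
        by (rule reach_induct_set) (use False reach_closed[of _ sr tg S x] in auto)
    qed
    then have eq: "?R' = ?R" using reach_mono[of S "insert g S" sr tg x] by auto
    have "{f \<in> insert g S. sr f \<in> ?R'} = {f\<in>S. sr f \<in> ?R}" using False eq by auto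
    then show ?thesis using insert.IH[of x] eq by simp
  next
    case True
    then obtain a b where ab: "a \<in> ?R" "{a, b} = {sr g, tg g}" by blast
    have eq: "?R' = ?R \<union> reach sr tg S b" by (rule reach_insert_edge[OF ab])
    have fin: "finite ?R" "finite (reach sr tg S b)" using reach_finite insert.hyps by auto
    show ?thesis
    proof (cases "?R \<inter> reach sr tg S b = {}")
      case False
      then have "reach sr tg S b = ?R" using reach_disj by blast
      then have "?R' = ?R" using eq by auto
      moreover have "card {f\<in>S. sr f \<in> ?R} \<le> card {f \<in> insert g S. sr f \<in> ?R}"
        by (rule card_mono) (use insert.hyps in auto)
      ultimately show ?thesis using insert.IH[of x] by simp
    next
      case True
      have "card ?R' = card ?R + card (reach sr tg S b)" using eq fin True by (simp add: card_Un_disjoint)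
      moreover have "\<dots> \<le> card {f\<in>S. sr f \<in> ?R} + card {f\<in>S. sr f \<in> reach sr tg S b} + 2"
        using insert.IH[of x] insert.IH[of b] by simp
      ultimately have "card ?R' \<le> card {f\<in>S. sr f \<in> ?R} + card {f\<in>S. sr f \<in> reach sr tg S b} + 2" by linarith
      have X: "card {f\<in>S. sr f \<in> ?R} + card {f\<in>S. sr f \<in> reach sr tg S b} + 1 =
          card (insert g ({f\<in>S. sr f \<in> ?R} \<union> {f\<in>S. sr f \<in> reach sr tg S b}))"
      proof -
        have d: "{f\<in>S. sr f \<in> ?R} \<inter> {f\<in>S. sr f \<in> reach sr tg S b} = {}" using True by auto
        have "card ({f\<in>S. sr f \<in> ?R} \<union> {f\<in>S. sr f \<in> reach sr tg S b}) = card {f\<in>S. sr f \<in> ?R} + card {f\<in>S. sr f \<in> reach sr tg S b}"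
          by (rule card_Un_disjoint) (use d insert.hyps in auto)
        then show ?thesis using insert.hyps by (subst card_insert_disjoint) auto
      qed
      have "card (insert g ({f\<in>S. sr f \<in> ?R} \<union> {f\<in>S. sr f \<in> reach sr tg S b})) \<le> card {f \<in> insert g S. sr f \<in> ?R'}"
      proof (rule card_mono)
        show "finite {f \<in> insert g S. sr f \<in> ?R'}" using insert.hyps by auto
        have "sr g \<in> ?R'"
          using ab eq by (metis UnI1 UnI2 doubleton_eq_iff reach_self)
        then show "insert g ({f\<in>S. sr f \<in> ?R} \<union> {f\<in>S. sr f \<in> reach sr tg S b}) \<subseteq> {f \<in> insert g S. sr f \<in> ?R'}"
          using eq by auto
      qed
      with X \<open>card ?R' \<le> _\<close> show ?thesis by linarith
    qed
  qed
qed


definition oth :: "(nat \<Rightarrow> nat) \<Rightarrow> (nat \<Rightarrow> nat) \<Rightarrow> nat \<Rightarrow> nat \<Rightarrow> nat" where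
  "oth sr tg f v = (if sr f = v then tg f else sr f)"

locale tree =
  fixes V E :: "nat set" and sr tg :: "nat \<Rightarrow> nat"
  assumes finV: "finite V" and finE: "finite E"
    and ends: "\<forall>f\<in>E. sr f \<in> V \<and> tg f \<in> V \<and> sr f \<noteq> tg f"
    and conn: "\<forall>u\<in>V. \<forall>w\<in>V. (u, w) \<in> (adjS sr tg E)\<^sup>*"
    and cardVE: "card E + 1 = card V"
begin

definition side :: "nat \<Rightarrow> nat \<Rightarrow> nat set" where
  "side e u = reach sr tg (E - {e}) u"

lemma side_sub: "u \<in> V \<Longrightarrow> side e u \<subseteq> V"
  unfolding side_def by (rule reach_subset) (use ends in auto)

lemma side_fin: "finite (side e u)"
  unfolding side_def by (rule reach_finite) (use finE in auto)

lemma side_cover: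
  assumes "e \<in> E" shows "V \<subseteq> side e (sr e) \<union> side e (tg e)"
proof
  fix w assume "w \<in> V"
  then have "w \<in> reach sr tg E (sr e)" using conn ends assms by (auto simp: reach_def)
  then show "w \<in> side e (sr e) \<union> side e (tg e)"
  proof (rule reach_induct_set)
    show "sr e \<in> side e (sr e) \<union> side e (tg e)" by (simp add: side_def)
    fix f assume "f \<in> E"
    show "sr f \<in> side e (sr e) \<union> side e (tg e) \<longleftrightarrow> tg f \<in> side e (sr e) \<union> side e (tg e)"
    proof (cases "f = e")
      case True then show ?thesis by (simp add: side_def)
    next
      case False then have "f \<in> E - {e}" using \<open>f \<in> E\<close> by auto
      then show ?thesis unfolding side_def using reach_closed[of _ sr tg "E - {e}"] by blast
    qed
  qed
qed

lemma side_disj: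
  assumes "e \<in> E" shows "side e (sr e) \<inter> side e (tg e) = {}"
proof (rule ccontr)
  assume "side e (sr e) \<inter> side e (tg e) \<noteq> {}"
  then have eq: "side e (tg e) = side e (sr e)" unfolding side_def using reach_disj by blast
  then have "V \<subseteq> side e (sr e)" using side_cover[OF assms] by auto
  then have "card V \<le> card (side e (sr e))" using side_fin by (simp add: card_mono)
  also have "\<dots> \<le> card {f\<in>E-{e}. sr f \<in> side e (sr e)} + 1"
    unfolding side_def by (rule reach_card_le) (use finE in auto)
  finally have a: "card V \<le> card {f\<in>E-{e}. sr f \<in> side e (sr e)} + 1" .
  have "card {f\<in>E-{e}. sr f \<in> side e (sr e)} \<le> card (E - {e})"
    by (rule card_mono) (use finE in auto)
  with a have "card V \<le> card (E - {e}) + 1" by linarith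
  moreover have "card E > 0" using assms finE by (auto simp: card_gt_0_iff)
  ultimately show False using cardVE assms finE by (simp add: card_Diff_singleton)
qed

lemma side_card:
  assumes "e \<in> E" "u = sr e \<or> u = tg e"
  shows "card (side e u) = card {f\<in>E-{e}. sr f \<in> side e u} + 1"
proof -
  let ?A = "side e (sr e)" and ?B = "side e (tg e)"
  let ?EA = "{f\<in>E-{e}. sr f \<in> ?A}" and ?EB = "{f\<in>E-{e}. sr f \<in> ?B}"
  have V: "V = ?A \<union> ?B" using side_cover[OF assms(1)] side_sub ends assms(1) by auto
  have cV: "card V = card ?A + card ?B" using V side_disj[OF assms(1)] side_fin by (simp add: card_Un_disjoint)
  have eqE: "E - {e} = ?EA \<union> ?EB" using V ends by auto
  have cEE: "card (E - {e}) = card (?EA \<union> ?EB)" using arg_cong[OF eqE, of card] .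
  have "?EA \<inter> ?EB = {}" using side_disj[OF assms(1)] by auto
  moreover have "card (?EA \<union> ?EB) = card ?EA + card ?EB"
    by (rule card_Un_disjoint) (use finE \<open>?EA \<inter> ?EB = {}\<close> in auto)
  ultimately have "card (E - {e}) = card ?EA + card ?EB" using cEE by linarith
  moreover have "card E > 0" using assms finE by (auto simp: card_gt_0_iff)
  ultimately have cE: "card ?EA + card ?EB + 2 = card V" using cardVE assms finE
    by (simp add: card_Diff_singleton)
  have a: "card ?A \<le> card ?EA + 1" unfolding side_def by (rule reach_card_le) (use finE in auto)
  have b: "card ?B \<le> card ?EB + 1" unfolding side_def by (rule reach_card_le) (use finE in auto)
  show ?thesis using assms(2) a b cE cV by auto
qed

lemma side_closed: "f \<in> E \<Longrightarrow> f \<noteq> e \<Longrightarrow> sr f \<in> side e u \<longleftrightarrow> tg f \<in> side e u"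
  unfolding side_def by (rule reach_closed[of u]) auto

lemma side_self[simp]: "u \<in> side e u" by (simp add: side_def)

lemma oth_simps:
  assumes "f \<in> E" "sr f = v \<or> tg f = v"
  shows "oth sr tg f v \<noteq> v" "{v, oth sr tg f v} = {sr f, tg f}"
  using assms ends by (auto simp: oth_def)

lemma side_oth_not:
  assumes "f \<in> E" "sr f = v \<or> tg f = v"
  shows "v \<notin> side f (oth sr tg f v)" "side f v \<inter> side f (oth sr tg f v) = {}"
proof -
  have d: "side f v \<inter> side f (oth sr tg f v) = {}"
    using side_disj[OF assms(1)] assms by (auto simp: oth_def Int_commute)
  then show "side f v \<inter> side f (oth sr tg f v) = {}" .
  show "v \<notin> side f (oth sr tg f v)" using d side_self[of v f] by blast
qed

lemma side_avoid:
  assumes "f \<in> E" "sr f = v \<or> tg f = v" "g \<in> E" "sr g = v \<or> tg g = v" "g \<noteq> f"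
    and "w \<in> side f (oth sr tg f v)"
  shows "w \<in> reach sr tg (E - {g}) (oth sr tg f v)"
proof -
  let ?u = "oth sr tg f v"
  let ?R = "reach sr tg (E - {g}) ?u \<inter> side f ?u"
  have "w \<in> ?R"
    using assms(6)[unfolded side_def]
  proof (rule reach_induct_set)
    show "?u \<in> ?R" by simp
    fix h assume h: "h \<in> E - {f}"
    show "sr h \<in> ?R \<longleftrightarrow> tg h \<in> ?R"
    proof (cases "h = g")
      case True
      have "v \<notin> side f ?u" using side_oth_not assms by auto
      then have "sr h \<notin> side f ?u \<and> tg h \<notin> side f ?u"
        using side_closed[of h f ?u] True assms h by auto
      then show ?thesis by auto
    next
      case False
      then show ?thesis using side_closed[of h f ?u] h reach_closed[of _ sr tg "E - {g}" ?u h] by auto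
    qed
  qed
  then show ?thesis by simp
qed

lemma partition_at:
  assumes "v \<in> V"
  shows "V - {v} = (\<Union>f\<in>{f\<in>E. sr f = v \<or> tg f = v}. side f (oth sr tg f v))"
proof -
  show "V - {v} = (\<Union>f\<in>{f\<in>E. sr f = v \<or> tg f = v}. side f (oth sr tg f v))"
  proof
    show "(\<Union>f\<in>{f\<in>E. sr f = v \<or> tg f = v}. side f (oth sr tg f v)) \<subseteq> V - {v}"
    proof
      fix w assume "w \<in> (\<Union>f\<in>{f\<in>E. sr f = v \<or> tg f = v}. side f (oth sr tg f v))"
      then obtain f where f: "f \<in> E" "sr f = v \<or> tg f = v" and w: "w \<in> side f (oth sr tg f v)" by auto
      have "oth sr tg f v \<in> V" using f ends by (auto simp: oth_def)
      then have "w \<in> V" using side_sub w by auto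
      moreover have "w \<noteq> v" using side_oth_not[OF f] w by auto
      ultimately show "w \<in> V - {v}" by auto
    qed
  next
    let ?U = "insert v (\<Union>f\<in>{f\<in>E. sr f = v \<or> tg f = v}. side f (oth sr tg f v))"
    have "w \<in> ?U" if "w \<in> V" for w
    proof -
      have "w \<in> reach sr tg E v" using conn that assms by (auto simp: reach_def)
      then show ?thesis
      proof (rule reach_induct_set)
        show "v \<in> ?U" by simp
        fix h assume h: "h \<in> E"
        show "sr h \<in> ?U \<longleftrightarrow> tg h \<in> ?U"
        proof (cases "sr h = v \<or> tg h = v")
          case True
          have "oth sr tg h v \<in> ?U" using h True using side_self by blast
          then show ?thesis using True by (auto simp: oth_def split: if_splits)
        next
          case False
          have "tg h \<in> ?U" if "sr h \<in> ?U"
          proof -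
            from that False obtain f where f: "f \<in> E" "sr f = v \<or> tg f = v" "sr h \<in> side f (oth sr tg f v)" by auto
            then have "h \<noteq> f" using False by auto
            then have "tg h \<in> side f (oth sr tg f v)" using side_closed[OF h] f by auto
            then show ?thesis using f by auto
          qed
          moreover have "sr h \<in> ?U" if "tg h \<in> ?U"
          proof -
            from that False obtain f where f: "f \<in> E" "sr f = v \<or> tg f = v" "tg h \<in> side f (oth sr tg f v)" by auto
            then have "h \<noteq> f" using False by auto
            then have "sr h \<in> side f (oth sr tg f v)" using side_closed[OF h] f by auto
            then show ?thesis using f by auto
          qed
          ultimately show ?thesis by blast
        qed
      qed
    qed
    then show "V - {v} \<subseteq> (\<Union>f\<in>{f\<in>E. sr f = v \<or> tg f = v}. side f (oth sr tg f v))" by blast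
  qed
qed

lemma partition_disj:
  assumes "f \<in> {f\<in>E. sr f = v \<or> tg f = v}" "g \<in> {f\<in>E. sr f = v \<or> tg f = v}" "f \<noteq> g"
  shows "side f (oth sr tg f v) \<inter> side g (oth sr tg g v) = {}"
proof -
  note f = assms(1) and g = assms(2) and fg = assms(3)
  show "side f (oth sr tg f v) \<inter> side g (oth sr tg g v) = {}"
  proof (rule ccontr)
    assume "side f (oth sr tg f v) \<inter> side g (oth sr tg g v) \<noteq> {}"
    then obtain w where w: "w \<in> side f (oth sr tg f v)" "w \<in> side g (oth sr tg g v)" by blast
    have "w \<in> reach sr tg (E - {g}) (oth sr tg f v)" using side_avoid f g fg w by auto
    then have "oth sr tg f v \<in> side g (oth sr tg g v)"
      using w(2) unfolding side_def by (meson reach_sym reach_trans)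
    moreover have "f \<in> E - {g}" using f fg by auto
    ultimately have "v \<in> side g (oth sr tg g v)"
      using reach_step[of "oth sr tg f v" sr tg "E - {g}" "oth sr tg g v" f] f unfolding side_def
      by (auto simp: oth_def split: if_splits)
    then show False using side_oth_not g by auto
  qed
qed

end


lemma card_fiber_sum:
  assumes "finite A" "finite W"
  shows "(\<Sum>v\<in>W. card {i\<in>A. g i = v}) = card {i\<in>A. g i \<in> W}"
proof -
  have "{i\<in>A. g i \<in> W} = (\<Union>v\<in>W. {i\<in>A. g i = v})" by auto
  moreover have "card (\<Union>v\<in>W. {i\<in>A. g i = v}) = (\<Sum>v\<in>W. card {i\<in>A. g i = v})"
    by (rule card_UN_disjoint) (use assms in auto)
  ultimately show ?thesis by simp
qed

lemma sum_pm1: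
  assumes "finite A"
  shows "(\<Sum>f\<in>A. if P f then 1 else -1 :: int) = int (card {f\<in>A. P f}) - int (card {f\<in>A. \<not> P f})"
proof -
  have "(\<Sum>f\<in>A. if P f then 1 else -1 :: int) = (\<Sum>f\<in>A \<inter> {x. P x}. 1) + (\<Sum>f\<in>A \<inter> - {x. P x}. -1)"
    by (rule sum.If_cases[OF assms])
  moreover have "A \<inter> {x. P x} = {f\<in>A. P f}" "A \<inter> - {x. P x} = {f\<in>A. \<not> P f}" by auto
  ultimately show ?thesis by simp
qed

context tree
begin

definition dflow :: "(nat \<Rightarrow> nat) \<Rightarrow> nat \<Rightarrow> int" where
  "dflow h v = int (card {f\<in>E. h f = v}) - int (card {f\<in>E. (sr f = v \<or> tg f = v) \<and> h f \<noteq> v})"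

lemma side_sum_split:
  assumes "e \<in> E"
  shows "(\<Sum>v\<in>side e (sr e). g v) + (\<Sum>v\<in>side e (tg e). g v) = (\<Sum>v\<in>V. g v)"
proof -
  have V: "V = side e (sr e) \<union> side e (tg e)" using side_cover[OF assms] side_sub ends assms by auto
  show ?thesis unfolding V by (rule sum.union_disjoint[symmetric]) (use side_fin side_disj[OF assms] in auto)
qed

lemma HQ:
  assumes hE: "\<forall>f\<in>E. h f = sr f \<or> h f = tg f" and e: "e \<in> E" and u: "u = sr e \<or> u = tg e"
  shows "(\<Sum>v\<in>side e u. dflow h v) = (if h e = u then 1 else -1)"
proof -
  let ?T = "side e u"
  define tl where "tl f = (if h f = sr f then tg f else sr f)" for f
  have tl_eq: "{f\<in>E. (sr f = v \<or> tg f = v) \<and> h f \<noteq> v} = {f\<in>E. tl f = v}" for v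
    using hE ends by (auto simp: tl_def)
  have s1: "(\<Sum>v\<in>?T. int (card {f\<in>E. h f = v})) = int (card {f\<in>E. h f \<in> ?T})"
    using card_fiber_sum[OF finE side_fin, of h e u] by (simp flip: of_nat_sum)
  have s2: "(\<Sum>v\<in>?T. int (card {f\<in>E. tl f = v})) = int (card {f\<in>E. tl f \<in> ?T})"
    using card_fiber_sum[OF finE side_fin, of tl e u] by (simp flip: of_nat_sum)
  let ?I = "{f\<in>E-{e}. sr f \<in> ?T}"
  have inner: "f \<in> E - {e} \<Longrightarrow> (h f \<in> ?T \<longleftrightarrow> sr f \<in> ?T) \<and> (tl f \<in> ?T \<longleftrightarrow> sr f \<in> ?T)" for f
    using hE side_closed[of f e u] by (auto simp: tl_def)
  have uT: "u \<in> ?T" by simp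
  have oT: "oth sr tg e u \<notin> ?T"
  proof -
    have "side e u \<inter> side e (oth sr tg e u) = {}"
      using side_disj[OF e] u ends e by (auto simp: oth_def Int_commute)
    then show ?thesis using side_self[of "oth sr tg e u" e] by blast
  qed
  have ou: "oth sr tg e u \<noteq> u" "{u, oth sr tg e u} = {sr e, tg e}" using oth_simps[OF e] u by auto
  have H: "{f\<in>E. h f \<in> ?T} = ?I \<union> (if h e = u then {e} else {})"
  proof -
    have "h e \<in> ?T \<longleftrightarrow> h e = u" using hE e ou uT oT by (metis doubleton_eq_iff)
    then show ?thesis using inner e by auto
  qed
  have L: "{f\<in>E. tl f \<in> ?T} = ?I \<union> (if h e = u then {} else {e})"
  proof -
    have "tl e \<in> ?T \<longleftrightarrow> h e \<noteq> u" using hE e ou uT oT ends unfolding tl_def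
      by (metis doubleton_eq_iff)
    then show ?thesis using inner e by auto
  qed
  have finI: "finite ?I" using finE by auto
  have "(\<Sum>v\<in>?T. dflow h v) = int (card {f\<in>E. h f \<in> ?T}) - int (card {f\<in>E. tl f \<in> ?T})"
    unfolding dflow_def tl_eq sum_subtractf s1 s2 ..
  also have "\<dots> = (if h e = u then 1 else -1)"
    unfolding H L using finI by auto
  finally show ?thesis .
qed

lemma flow_construct:
  fixes g :: "nat \<Rightarrow> int"
  assumes tot: "(\<Sum>v\<in>V. g v) = 0"
    and pm: "\<forall>e\<in>E. (\<Sum>v\<in>side e (tg e). g v) = 1 \<or> (\<Sum>v\<in>side e (tg e). g v) = -1"
    and h_def: "\<And>e. h e = (if (\<Sum>v\<in>side e (tg e). g v) = 1 then tg e else sr e)"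
    and v: "v \<in> V"
  shows "dflow h v = g v"
proof -
  let ?Ev = "{f\<in>E. sr f = v \<or> tg f = v}"
  have finEv: "finite ?Ev" using finE by auto
  have a: "{f\<in>E. h f = v} = {f\<in>?Ev. h f = v}" using h_def by auto
  have "dflow h v = (\<Sum>f\<in>?Ev. if h f = v then 1 else -1)"
    unfolding dflow_def sum_pm1[OF finEv] a by simp
  also have "\<dots> = (\<Sum>f\<in>?Ev. - (\<Sum>w\<in>side f (oth sr tg f v). g w))"
  proof (rule sum.cong[OF refl])
    fix f assume f: "f \<in> ?Ev"
    have sp: "(\<Sum>w\<in>side f (sr f). g w) = - (\<Sum>w\<in>side f (tg f). g w)"
      using side_sum_split[of f g] tot f by auto
    have srtg: "sr f \<noteq> tg f" using ends f by auto
    show "(if h f = v then 1 else -1) = - (\<Sum>w\<in>side f (oth sr tg f v). g w)"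
      using f pm sp srtg h_def[of f] unfolding oth_def by auto
  qed
  also have "\<dots> = - (\<Sum>f\<in>?Ev. \<Sum>w\<in>side f (oth sr tg f v). g w)"
    by (simp add: sum_negf)
  also have "(\<Sum>f\<in>?Ev. \<Sum>w\<in>side f (oth sr tg f v). g w) = (\<Sum>w\<in>V - {v}. g w)"
  proof -
    have "(\<Sum>w\<in>V - {v}. g w) = (\<Sum>w\<in>(\<Union>f\<in>?Ev. side f (oth sr tg f v)). g w)"
      using partition_at[OF v] by simp
    also have "\<dots> = (\<Sum>f\<in>?Ev. \<Sum>w\<in>side f (oth sr tg f v). g w)"
      by (rule sum.UNION_disjoint) (use finEv side_fin partition_disj in auto)
    finally show ?thesis by simp
  qed
  also have "- (\<Sum>w\<in>V - {v}. g w) = g v"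
    using tot v finV by (simp add: sum_diff1)
  finally show ?thesis .
qed

end


lemma expand:
  fixes U :: "nat \<Rightarrow> real \<times> real"
  assumes "w \<in> reach sr tg S x" "finite S"
  shows "\<exists>\<gamma>::nat\<Rightarrow>real. (\<forall>(q::nat \<Rightarrow> real \<times> real) ln. (\<forall>f\<in>S. q (tg f) - q (sr f) = ln f *\<^sub>R U f) \<longrightarrow>
            q w = q x + (\<Sum>f\<in>{f\<in>S. sr f \<in> reach sr tg S x}. (\<gamma> f * ln f) *\<^sub>R U f))"
proof -
  let ?A = "{f\<in>S. sr f \<in> reach sr tg S x}"
  have finA: "finite ?A" using assms(2) by auto
  have "(x, w) \<in> (adjS sr tg S)\<^sup>*" using assms(1) by (simp add: reach_def)
  then show ?thesis
  proof (induction rule: rtrancl_induct)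
    case base
    show ?case by (rule exI[of _ "\<lambda>_. 0"]) simp
  next
    case (step y z)
    then obtain \<gamma> where IH: "\<forall>(q::nat \<Rightarrow> real \<times> real) ln. (\<forall>f\<in>S. q (tg f) - q (sr f) = ln f *\<^sub>R U f) \<longrightarrow>
            q y = q x + (\<Sum>f\<in>?A. (\<gamma> f * ln f) *\<^sub>R U f)" by blast
    have yR: "y \<in> reach sr tg S x" using step.hyps(1) by (simp add: reach_def)
    from step.hyps(2) obtain f where f: "f \<in> S" "(y = sr f \<and> z = tg f) \<or> (y = tg f \<and> z = sr f)"
      unfolding adjS_def by auto
    have fA: "f \<in> ?A" using reach_step[OF yR f(1)] f by auto
    define \<epsilon> :: real where "\<epsilon> = (if y = sr f \<and> z = tg f then 1 else -1)"
    define \<gamma>' where "\<gamma>' = (\<lambda>g. \<gamma> g + (if g = f then \<epsilon> else 0))"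
    show ?case
    proof (rule exI[of _ \<gamma>'], intro allI impI)
      fix q :: "nat \<Rightarrow> real \<times> real" and ln :: "nat \<Rightarrow> real"
      assume eqs: "\<forall>f\<in>S. q (tg f) - q (sr f) = ln f *\<^sub>R U f"
      have zy: "q z = q y + (\<epsilon> * ln f) *\<^sub>R U f"
        using eqs f unfolding \<epsilon>_def by (auto simp: algebra_simps)
      have "(\<Sum>g\<in>?A. (\<gamma>' g * ln g) *\<^sub>R U g) = (\<Sum>g\<in>?A. (\<gamma> g * ln g) *\<^sub>R U g + (if g = f then (\<epsilon> * ln g) *\<^sub>R U g else 0))"
        by (rule sum.cong) (auto simp: \<gamma>'_def algebra_simps)
      also have "\<dots> = (\<Sum>g\<in>?A. (\<gamma> g * ln g) *\<^sub>R U g) + (\<Sum>g\<in>?A. (if g = f then (\<epsilon> * ln g) *\<^sub>R U g else 0))"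
        by (rule sum.distrib)
      also have "(\<Sum>g\<in>?A. (if g = f then (\<epsilon> * ln g) *\<^sub>R U g else 0)) = (\<epsilon> * ln f) *\<^sub>R U f"
        using fA finA by (simp add: sum.delta)
      finally have sg: "(\<Sum>g\<in>?A. (\<gamma>' g * ln g) *\<^sub>R U g) = (\<Sum>g\<in>?A. (\<gamma> g * ln g) *\<^sub>R U g) + (\<epsilon> * ln f) *\<^sub>R U f" .
      show "q z = q x + (\<Sum>g\<in>?A. (\<gamma>' g * ln g) *\<^sub>R U g)"
      proof -
        have "q y = q x + (\<Sum>f\<in>?A. (\<gamma> f * ln f) *\<^sub>R U f)" using IH eqs by blast
        with zy sg show ?thesis by (simp add: algebra_simps)
      qed
    qed
  qed
qed

lemma concat_pairs_len: "length (concat (map (\<lambda>i. [f i, g i]) [1..<m+1])) = 2 * m"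
  by (induction m) auto

lemma concat_pairs_nth:
  "k < 2 * m \<Longrightarrow> concat (map (\<lambda>i. [f i, g i]) [1..<m+1]) ! k = (if even k then f (k div 2 + 1) else g (k div 2 + 1))"
proof (induction m arbitrary: k)
  case 0 then show ?case by simp
next
  case (Suc m)
  have len: "length (concat (map (\<lambda>i. [f i, g i]) [1..<m+1])) = 2 * m"
    by (rule concat_pairs_len)
  have up: "[1..<Suc m + 1] = [1..<m+1] @ [m+1]" by simp
  have e: "concat (map (\<lambda>i. [f i, g i]) [1..<Suc m + 1]) = concat (map (\<lambda>i. [f i, g i]) [1..<m+1]) @ [f (m+1), g (m+1)]"
    unfolding up by simp
  show ?case
  proof (cases "k < 2 * m")
    case True then show ?thesis unfolding e nth_append len using Suc.IH by simp
  next
    case False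
    then have "k = 2 * m \<or> k = 2 * m + 1" using Suc.prems by auto
    then show ?thesis unfolding e nth_append len by auto
  qed
qed

lemma ev_coords_len: "finite F \<Longrightarrow> length (ev_coords r s \<Delta> F C) = 2 * (r + s) + card F"
  unfolding ev_coords_def length_append concat_pairs_len by simp

lemma ev_nth1:
  assumes "k < 2 * (r + s)"
  shows "ev_coords r s \<Delta> F D ! k =
   (if even k then fst (c_pos D (c_mark D (k div 2 + 1))) else snd (c_pos D (c_mark D (k div 2 + 1))))"
proof -
  have N: "concat (map (\<lambda>i. [fst (c_pos D (c_mark D i)), snd (c_pos D (c_mark D i))]) [1..<r+s+1]) ! k =
    (if even k then fst (c_pos D (c_mark D (k div 2 + 1))) else snd (c_pos D (c_mark D (k div 2 + 1))))"
    by (rule concat_pairs_nth[OF assms])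
  show ?thesis unfolding ev_coords_def nth_append concat_pairs_len N
    using assms by (simp only: eqTrueI[OF assms] if_True)
qed

lemma ev_nth2:
  assumes "finite F" "t < card F"
  shows "ev_coords r s \<Delta> F D ! (2 * (r + s) + t) =
   det2 (vvec \<Delta> (sorted_list_of_set F ! t)) (c_pos D (c_endv D (sorted_list_of_set F ! t)))"
  unfolding ev_coords_def nth_append concat_pairs_len using assms by simp

lemma rvec_neg: "rvec (- u) = - rvec u"
  by (simp add: rvec_def)

lemma edge_eq_match:
  assumes D: "is_curve r s \<Delta> D" and gm: "graph_match r s \<Delta> C D \<phi> \<psi>" and f: "f \<in> c_edges C"
  shows "c_pos D (\<phi> (c_tgt C f)) - c_pos D (\<phi> (c_src C f)) = c_len D (\<psi> f) *\<^sub>R rvec (c_dir C f)"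
proof -
  have pf: "\<psi> f \<in> c_edges D" using gm f unfolding graph_match_def bij_betw_def by auto
  have eq: "c_pos D (c_tgt D (\<psi> f)) - c_pos D (c_src D (\<psi> f)) = c_len D (\<psi> f) *\<^sub>R rvec (c_dir D (\<psi> f))"
    using D pf unfolding is_curve_def by auto
  from gm f have "(c_src D (\<psi> f) = \<phi> (c_src C f) \<and> c_tgt D (\<psi> f) = \<phi> (c_tgt C f) \<and> c_dir D (\<psi> f) = c_dir C f) \<or>
        (c_src D (\<psi> f) = \<phi> (c_tgt C f) \<and> c_tgt D (\<psi> f) = \<phi> (c_src C f) \<and> c_dir D (\<psi> f) = - c_dir C f)"
    unfolding graph_match_def by auto
  then show ?thesis
  proof
    assume "c_src D (\<psi> f) = \<phi> (c_src C f) \<and> c_tgt D (\<psi> f) = \<phi> (c_tgt C f) \<and> c_dir D (\<psi> f) = c_dir C f"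
    then show ?thesis using eq by simp
  next
    assume h: "c_src D (\<psi> f) = \<phi> (c_tgt C f) \<and> c_tgt D (\<psi> f) = \<phi> (c_src C f) \<and> c_dir D (\<psi> f) = - c_dir C f"
    have "c_pos D (\<phi> (c_src C f)) - c_pos D (\<phi> (c_tgt C f)) = - (c_len D (\<psi> f) *\<^sub>R rvec (c_dir C f))"
      using eq h by (simp add: rvec_neg)
    then show ?thesis by (simp add: algebra_simps)
  qed
qed


lemma card_coords:
  fixes mk en :: "nat \<Rightarrow> nat"
  assumes finF: "finite F"
  shows "card {k. k < 2*(r+s) + card F \<and> (if k < 2*(r+s) then mk (k div 2 + 1) else en (sorted_list_of_set F ! (k - 2*(r+s)))) \<in> T}
       = 2 * card {i\<in>{1..r+s}. mk i \<in> T} + card {j\<in>F. en j \<in> T}"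
proof -
  let ?L = "sorted_list_of_set F"
  let ?M = "{i\<in>{1..r+s}. mk i \<in> T}"
  let ?G = "{t. t < card F \<and> en (?L ! t) \<in> T}"
  have K: "{k. k < 2*(r+s) + card F \<and> (if k < 2*(r+s) then mk (k div 2 + 1) else en (?L ! (k - 2*(r+s)))) \<in> T}
     = ((\<lambda>i. 2*i - 2) ` ?M \<union> (\<lambda>i. 2*i - 1) ` ?M) \<union> (\<lambda>t. 2*(r+s) + t) ` ?G" (is "?K = _")
  proof (rule set_eqI, rule iffI)
    fix k assume k: "k \<in> ?K"
    show "k \<in> ((\<lambda>i. 2*i - 2) ` ?M \<union> (\<lambda>i. 2*i - 1) ` ?M) \<union> (\<lambda>t. 2*(r+s) + t) ` ?G"
    proof (cases "k < 2*(r+s)")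
      case True
      then have i: "k div 2 + 1 \<in> ?M" using k by auto
      have "k = 2 * (k div 2 + 1) - 2 \<or> k = 2 * (k div 2 + 1) - 1" by (cases "even k") (auto elim: evenE oddE)
      then show ?thesis using i by blast
    next
      case False
      then have "k - 2*(r+s) \<in> ?G" "k = 2*(r+s) + (k - 2*(r+s))" using k by auto
      then show ?thesis by blast
    qed
  next
    fix k assume "k \<in> ((\<lambda>i. 2*i - 2) ` ?M \<union> (\<lambda>i. 2*i - 1) ` ?M) \<union> (\<lambda>t. 2*(r+s) + t) ` ?G"
    then consider (a) i where "i \<in> ?M" "k = 2*i - 2" | (b) i where "i \<in> ?M" "k = 2*i - 1"
      | (c) t where "t \<in> ?G" "k = 2*(r+s) + t" by blast
    then show "k \<in> ?K"
    proof cases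
      case a
      have i: "1 \<le> i" "i \<le> r + s" using a by auto
      have "k < 2*(r+s)" using i a(2) by arith
      moreover have "k div 2 + 1 = i" using i a(2) by (cases i) (auto simp: a(2))
      ultimately show ?thesis using a by auto
    next
      case b
      have i: "1 \<le> i" "i \<le> r + s" using b by auto
      have "k < 2*(r+s)" using i b(2) by arith
      moreover have "k div 2 + 1 = i" using i b(2) by (cases i) (auto simp: b(2))
      ultimately show ?thesis using b by auto
    qed auto
  qed
  have finM: "finite ?M" by auto
  have c1: "card ((\<lambda>i. 2*i - 2) ` ?M) = card ?M"
    by (rule card_image) (auto simp: inj_on_def)
  have c2: "card ((\<lambda>i. 2*i - 1) ` ?M) = card ?M"
    by (rule card_image) (auto simp: inj_on_def)
  have ne: "2*i - 2 \<noteq> 2*j - (1::nat)" if "i \<ge> 1" "j \<ge> 1" for i j :: nat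
    using that by presburger
  have d12: "(\<lambda>i. 2*i - 2) ` ?M \<inter> (\<lambda>i. 2*i - 1) ` ?M = {}"
    using ne by fastforce
  have c12: "card ((\<lambda>i. 2*i - 2) ` ?M \<union> (\<lambda>i. 2*i - 1) ` ?M) = 2 * card ?M"
    using card_Un_disjoint[OF _ _ d12] finM c1 c2 by simp
  have d3: "((\<lambda>i. 2*i - 2) ` ?M \<union> (\<lambda>i. 2*i - 1) ` ?M) \<inter> (\<lambda>t. 2*(r+s) + t) ` ?G = {}"
    by auto
  have c3: "card ((\<lambda>t. 2*(r+s) + t) ` ?G) = card ?G"
    by (rule card_image) (auto simp: inj_on_def)
  have dist: "distinct ?L" by simp
  have lenL: "length ?L = card F" by simp
  have G: "{j\<in>F. en j \<in> T} = (!) ?L ` ?G"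
  proof
    show "(!) ?L ` ?G \<subseteq> {j\<in>F. en j \<in> T}"
    proof
      fix j assume "j \<in> (!) ?L ` ?G"
      then obtain t where t: "t < card F" "en (?L ! t) \<in> T" "j = ?L ! t" by auto
      then have "j \<in> set ?L" using lenL by auto
      then show "j \<in> {j\<in>F. en j \<in> T}" using finF t by simp
    qed
    show "{j\<in>F. en j \<in> T} \<subseteq> (!) ?L ` ?G"
    proof
      fix j assume j: "j \<in> {j\<in>F. en j \<in> T}"
      then have "j \<in> set ?L" using finF by simp
      then obtain t where "t < length ?L" "?L ! t = j" by (auto simp: in_set_conv_nth)
      then show "j \<in> (!) ?L ` ?G" using j lenL by auto
    qed
  qed
  have c4: "card {j\<in>F. en j \<in> T} = card ?G"
    unfolding G by (rule card_image, rule inj_on_nth[OF dist]) (auto simp: lenL)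
  show ?thesis unfolding K
    using card_Un_disjoint[OF _ _ d3] c12 c3 c4 finM by simp
qed

lemma lam_sum:
  fixes u :: "nat \<Rightarrow> real \<times> real"
  shows "al * fst (\<Sum>f\<in>A. c f *\<^sub>R u f) + be * snd (\<Sum>f\<in>A. c f *\<^sub>R u f) = (\<Sum>f\<in>A. c f * (al * fst (u f) + be * snd (u f)))"
  by (simp add: fst_sum snd_sum sum_distrib_left sum.distrib[symmetric] algebra_simps)


lemma DL:
  fixes C :: curve
  assumes C: "is_curve r s \<Delta> C" and gp: "gen_pos r s \<Delta> F P" and ev: "ev_eq r s \<Delta> F C P"
    and finF: "finite F" and Fsub: "F \<subseteq> {1..length \<Delta>}"
    and S: "S \<subseteq> c_edges C"
  shows "2 * card {i\<in>{1..r+s}. c_mark C i \<in> reach (c_src C) (c_tgt C) S x}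
         + card {j\<in>F. c_endv C j \<in> reach (c_src C) (c_tgt C) S x}
         \<le> 2 + card {f\<in>S. c_dir C f \<noteq> 0 \<and> c_src C f \<in> reach (c_src C) (c_tgt C) S x}"
proof (rule ccontr)
  assume big: "\<not> ?thesis"
  define T where "T = reach (c_src C) (c_tgt C) S x"
  define N where "N = 2*(r+s) + card F"
  define L where "L = sorted_list_of_set F"
  define cv where "cv k = (if k < 2*(r+s) then c_mark C (k div 2 + 1) else c_endv C (L ! (k - 2*(r+s))))" for k
  define K where "K = {k. k < N \<and> cv k \<in> T}"
  define Snc where "Snc = {f\<in>S. c_dir C f \<noteq> 0 \<and> c_src C f \<in> T}"
  define ST where "ST = {f\<in>S. c_src C f \<in> T}"
  have finE: "finite (c_edges C)" using C by (simp add: is_curve_def)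
  have finS: "finite S" using finE S finite_subset by blast
  have finK: "finite K" by (simp add: K_def)
  have cardK: "card K = 2 * card {i\<in>{1..r+s}. c_mark C i \<in> T} + card {j\<in>F. c_endv C j \<in> T}"
    unfolding K_def N_def cv_def L_def by (rule card_coords[OF finF])
  define U where "U f = rvec (c_dir C f)" for f
  define gam where "gam w = (SOME \<gamma>::nat\<Rightarrow>real. \<forall>(q::nat \<Rightarrow> real \<times> real) ln. (\<forall>f\<in>S. q (c_tgt C f) - q (c_src C f) = ln f *\<^sub>R U f) \<longrightarrow>
            q w = q x + (\<Sum>f\<in>ST. (\<gamma> f * ln f) *\<^sub>R U f))" for w
  have gam: "\<And>q ln. (\<forall>f\<in>S. q (c_tgt C f) - q (c_src C f) = ln f *\<^sub>R U f) \<Longrightarrow>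
            q w = q x + (\<Sum>f\<in>ST. (gam w f * ln f) *\<^sub>R U f)" if "w \<in> T" for w
  proof -
    have "\<exists>\<gamma>::nat\<Rightarrow>real. \<forall>(q::nat \<Rightarrow> real \<times> real) ln. (\<forall>f\<in>S. q (c_tgt C f) - q (c_src C f) = ln f *\<^sub>R U f) \<longrightarrow>
            q w = q x + (\<Sum>f\<in>ST. (\<gamma> f * ln f) *\<^sub>R U f)"
      using expand[of w "c_src C" "c_tgt C" S x U] that finS by (simp add: T_def ST_def)
    from someI_ex[OF this] show "\<And>q ln. (\<forall>f\<in>S. q (c_tgt C f) - q (c_src C f) = ln f *\<^sub>R U f) \<Longrightarrow>
            q w = q x + (\<Sum>f\<in>ST. (gam w f * ln f) *\<^sub>R U f)"
      unfolding gam_def by blast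
  qed
  define al where "al k = (if k < 2*(r+s) then (if even k then 1 else 0) else - real_of_int (snd (vvec \<Delta> (L ! (k - 2*(r+s))))))" for k
  define be where "be k = (if k < 2*(r+s) then (if even k then 0 else 1) else real_of_int (fst (vvec \<Delta> (L ! (k - 2*(r+s))))))" for k
  define lam where "lam k p = al k * fst p + be k * snd p" for k and p :: "real \<times> real"
  define Pm where "Pm = insert 0 (insert (1::nat) ((\<lambda>f. f + 2) ` Snc))"
  define A where "A \<pi> k = (if \<pi> = 0 then al k else if \<pi> = 1 then be k else gam (cv k) (\<pi> - 2) * lam k (U (\<pi> - 2)))" for \<pi> k
  have finSnc: "finite Snc" using finS by (simp add: Snc_def)
  have "card Pm \<le> 2 + card Snc"
  proof -
    have "Pm = {0, 1} \<union> (\<lambda>f. f + 2) ` Snc" by (auto simp: Pm_def)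
    then have "card Pm \<le> card {0::nat, 1} + card ((\<lambda>f. f + 2) ` Snc)"
      by (simp only: card_Un_le)
    then have "card Pm \<le> Suc (Suc (card ((\<lambda>f. f + 2) ` Snc)))" by simp
    moreover have "card ((\<lambda>f. f + 2) ` Snc) \<le> card Snc" by (rule card_image_le[OF finSnc])
    ultimately show ?thesis by simp
  qed
  then have "card Pm < card K" using big cardK unfolding Snc_def T_def by simp
  from lin_alg_exists[OF _ finK this, of A] obtain c where
    c: "\<exists>k\<in>K. c k \<noteq> 0" "\<forall>\<pi>\<in>Pm. (\<Sum>k\<in>K. A \<pi> k * c k) = 0"
    using finSnc by (auto simp: Pm_def)
  define a where "a k = (if k \<in> K then c k else 0)" for k
  from c(1) obtain k0 where k0: "k0 \<in> K" "c k0 \<noteq> 0" by blast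
  have k0N: "k0 < N" "a k0 \<noteq> 0" using k0 by (auto simp: K_def a_def)
  have main: "\<forall>p\<in>ev_coords r s \<Delta> F ` cell r s \<Delta> C. (\<Sum>k<N. a k * p ! k) = 0"
  proof
    fix p assume "p \<in> ev_coords r s \<Delta> F ` cell r s \<Delta> C"
    then obtain D where D: "D \<in> cell r s \<Delta> C" "p = ev_coords r s \<Delta> F D" by auto
    then have Dc: "is_curve r s \<Delta> D" and "same_type r s \<Delta> C D" by (auto simp: cell_def)
    then obtain \<phi> \<psi> where gm: "graph_match r s \<Delta> C D \<phi> \<psi>" by (auto simp: same_type_def)
    define q where "q v = c_pos D (\<phi> v)" for v
    define ln where "ln f = c_len D (\<psi> f)" for f
    define val where "val \<pi> = (if \<pi> = 0 then fst (q x) else if \<pi> = 1 then snd (q x) else ln (\<pi> - 2))" for \<pi>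
    have eqs: "\<forall>f\<in>S. q (c_tgt C f) - q (c_src C f) = ln f *\<^sub>R U f"
      using edge_eq_match[OF Dc gm] S unfolding q_def ln_def U_def by auto
    have coord: "p ! k = (\<Sum>\<pi>\<in>Pm. A \<pi> k * val \<pi>)" if k: "k \<in> K" for k
    proof -
      have kT: "cv k \<in> T" and kN: "k < N" using k by (auto simp: K_def)
      have pk: "p ! k = lam k (q (cv k))"
      proof (cases "k < 2*(r+s)")
        case True
        have i: "k div 2 + 1 \<in> {1..r+s}" using True by auto
        have "c_mark D (k div 2 + 1) = \<phi> (c_mark C (k div 2 + 1))"
          using gm i unfolding graph_match_def by blast
        then show ?thesis using True unfolding D(2) ev_nth1[OF True]
          by (simp add: lam_def al_def be_def q_def cv_def)
      next
        case False
        define t where "t = k - 2*(r+s)"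
        have t: "t < card F" "k = 2*(r+s) + t" using False kN by (auto simp: t_def N_def)
        have "L ! t \<in> set L" using t(1) by (simp add: L_def)
        then have jF: "L ! t \<in> F" using finF by (simp add: L_def)
        then have "L ! t \<in> {1..length \<Delta>}" using Fsub by auto
        then have "c_endv D (L ! t) = \<phi> (c_endv C (L ! t))"
          using gm unfolding graph_match_def by blast
        then show ?thesis unfolding D(2) t(2) ev_nth2[OF finF t(1)]
          by (simp add: lam_def al_def be_def q_def cv_def det2_def L_def algebra_simps)
      qed
      have qk: "q (cv k) = q x + (\<Sum>f\<in>ST. (gam (cv k) f * ln f) *\<^sub>R U f)"
        using gam[OF kT] eqs by blast
      have "lam k (q (cv k)) = al k * fst (q x) + be k * snd (q x) + (\<Sum>f\<in>ST. (gam (cv k) f * ln f) * lam k (U f))"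
        unfolding qk lam_def using lam_sum[of "al k" "\<lambda>f. gam (cv k) f * ln f" U ST "be k"]
        by (simp add: algebra_simps)
      also have "(\<Sum>f\<in>ST. (gam (cv k) f * ln f) * lam k (U f)) = (\<Sum>f\<in>Snc. (gam (cv k) f * ln f) * lam k (U f))"
      proof (rule sum.mono_neutral_right)
        show "finite ST" using finS by (simp add: ST_def)
        show "Snc \<subseteq> ST" by (auto simp: Snc_def ST_def)
        show "\<forall>f\<in>ST - Snc. gam (cv k) f * ln f * lam k (U f) = 0"
          by (auto simp: Snc_def ST_def U_def rvec_def lam_def)
      qed
      also have "al k * fst (q x) + be k * snd (q x) + (\<Sum>f\<in>Snc. (gam (cv k) f * ln f) * lam k (U f)) = (\<Sum>\<pi>\<in>Pm. A \<pi> k * val \<pi>)"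
      proof -
        have n01: "0 \<notin> insert 1 ((\<lambda>f. f + 2) ` Snc)" "1 \<notin> (\<lambda>f. f + 2) ` Snc" by auto
        have "(\<Sum>\<pi>\<in>Pm. A \<pi> k * val \<pi>) = A 0 k * val 0 + (A 1 k * val 1 + (\<Sum>\<pi>\<in>(\<lambda>f. f + 2) ` Snc. A \<pi> k * val \<pi>))"
          unfolding Pm_def using n01 finSnc by simp
        also have "(\<Sum>\<pi>\<in>(\<lambda>f. f + 2) ` Snc. A \<pi> k * val \<pi>) = (\<Sum>f\<in>Snc. A (f + 2) k * val (f + 2))"
          by (rule sum.reindex[unfolded comp_def]) (auto simp: inj_on_def)
        also have "\<dots> = (\<Sum>f\<in>Snc. (gam (cv k) f * ln f) * lam k (U f))"
          by (rule sum.cong) (auto simp: A_def val_def)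
        finally show ?thesis by (simp add: A_def val_def)
      qed
      finally show ?thesis using pk by simp
    qed
    have "(\<Sum>k<N. a k * p ! k) = (\<Sum>k\<in>K. c k * p ! k)"
    proof -
      have "(\<Sum>k<N. a k * p ! k) = (\<Sum>k\<in>K. a k * p ! k)"
        by (rule sum.mono_neutral_right) (auto simp: K_def a_def)
      then show ?thesis by (simp add: a_def)
    qed
    also have "\<dots> = (\<Sum>k\<in>K. c k * (\<Sum>\<pi>\<in>Pm. A \<pi> k * val \<pi>))"
      by (rule sum.cong) (auto simp: coord)
    also have "\<dots> = (\<Sum>k\<in>K. \<Sum>\<pi>\<in>Pm. val \<pi> * (A \<pi> k * c k))"
      by (simp add: sum_distrib_left mult_ac)
    also have "\<dots> = (\<Sum>\<pi>\<in>Pm. \<Sum>k\<in>K. val \<pi> * (A \<pi> k * c k))"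
      by (rule sum.swap)
    also have "\<dots> = (\<Sum>\<pi>\<in>Pm. val \<pi> * (\<Sum>k\<in>K. A \<pi> k * c k))"
      by (simp add: sum_distrib_left)
    also have "\<dots> = 0" using c(2) by simp
    finally show "(\<Sum>k<N. a k * p ! k) = 0" .
  qed
  have "\<not> dim_ge N (ev_coords r s \<Delta> F ` cell r s \<Delta> C) N"
    by (rule hyperplane_not_dim[OF k0N main])
  then show False using gp C ev unfolding gen_pos_def N_def by blast
qed


lemma curve_tree: "is_curve r s \<Delta> C \<Longrightarrow> tree (c_verts C) (c_edges C) (c_src C) (c_tgt C)"
  unfolding tree_def is_curve_def
  by (simp add: adj_rel_def adjS_def)

locale bc =
  fixes r s :: nat and \<Delta> :: "(int \<times> int) list" and F :: "nat set"
    and P :: "(nat \<Rightarrow> real \<times> real) \<times> (nat \<Rightarrow> real \<times> real)" and C :: curve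
  assumes C: "is_curve r s \<Delta> C" and gp: "gen_pos r s \<Delta> F P" and ev: "ev_eq r s \<Delta> F C P"
    and Fsub: "F \<subseteq> {1..length \<Delta>}"
begin

sublocale tree "c_verts C" "c_edges C" "c_src C" "c_tgt C"
  by (rule curve_tree[OF C])

lemma finF: "finite F" using Fsub finite_subset by blast

lemma marks_in: "i \<in> {1..r+s} \<Longrightarrow> c_mark C i \<in> c_verts C"
  using C by (auto simp: is_curve_def)

lemma endv_in: "j \<in> {1..length \<Delta>} \<Longrightarrow> c_endv C j \<in> c_verts C"
  using C by (auto simp: is_curve_def)

lemma DLc: "S \<subseteq> c_edges C \<Longrightarrow>
  2 * card {i\<in>{1..r+s}. c_mark C i \<in> reach (c_src C) (c_tgt C) S x}
         + card {j\<in>F. c_endv C j \<in> reach (c_src C) (c_tgt C) S x}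
         \<le> 2 + card {f\<in>S. c_dir C f \<noteq> 0 \<and> c_src C f \<in> reach (c_src C) (c_tgt C) S x}"
  by (rule DL[OF C gp ev finF Fsub])

lemma marks_le1: "card (marks_at r s C v) \<le> 1"
proof -
  have R: "reach (c_src C) (c_tgt C) {} v = {v}" unfolding reach_def adjS_def by auto
  have "2 * card (marks_at r s C v) \<le> 2"
    using DLc[of "{}" v] unfolding R by (simp add: marks_at_def)
  then show ?thesis by simp
qed

lemma no_contr_marked:
  assumes f: "f \<in> c_edges C" "c_dir C f = 0"
    and m1: "marks_at r s C (c_src C f) \<noteq> {}" and m2: "marks_at r s C (c_tgt C f) \<noteq> {}"
  shows False
proof -
  let ?R = "reach (c_src C) (c_tgt C) {f} (c_src C f)"
  have inR: "c_src C f \<in> ?R" "c_tgt C f \<in> ?R" using reach_step[of "c_src C f" "c_src C" "c_tgt C" "{f}" "c_src C f" f] by auto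
  obtain i where i: "i \<in> {1..r+s}" "c_mark C i = c_src C f" using m1 by (auto simp: marks_at_def)
  obtain j where j: "j \<in> {1..r+s}" "c_mark C j = c_tgt C f" using m2 by (auto simp: marks_at_def)
  have ne: "c_src C f \<noteq> c_tgt C f" using ends f by auto
  have "{i, j} \<subseteq> {i\<in>{1..r+s}. c_mark C i \<in> ?R}" using i j inR by auto
  moreover have "i \<noteq> j" using i j ne by auto
  ultimately have "card {i, j} \<le> card {i\<in>{1..r+s}. c_mark C i \<in> ?R}"
    by (intro card_mono) auto
  then have "2 \<le> card {i\<in>{1..r+s}. c_mark C i \<in> ?R}" using \<open>i \<noteq> j\<close> by simp
  moreover have "card {g\<in>{f}. c_dir C g \<noteq> 0 \<and> c_src C g \<in> ?R} = 0" using f by auto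
  moreover have "2 * card {i\<in>{1..r+s}. c_mark C i \<in> ?R} + card {j\<in>F. c_endv C j \<in> ?R}
         \<le> 2 + card {g\<in>{f}. c_dir C g \<noteq> 0 \<and> c_src C g \<in> ?R}" using DLc[of "{f}" "c_src C f"] f by simp
  ultimately show False by linarith
qed

lemma reach_all: "x \<in> c_verts C \<Longrightarrow> reach (c_src C) (c_tgt C) (c_edges C) x = c_verts C"
proof
  assume x: "x \<in> c_verts C"
  show "reach (c_src C) (c_tgt C) (c_edges C) x \<subseteq> c_verts C"
    by (rule reach_subset[OF x]) (use ends in auto)
  show "c_verts C \<subseteq> reach (c_src C) (c_tgt C) (c_edges C) x"
    using conn x by (auto simp: reach_def)
qed

lemma DL_global: "2 * (r + s) + card F \<le> 2 + card {f\<in>c_edges C. c_dir C f \<noteq> 0}"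
proof -
  obtain x where x: "x \<in> c_verts C" using C by (auto simp: is_curve_def)
  have "{i\<in>{1..r+s}. c_mark C i \<in> c_verts C} = {1..r+s}" using marks_in by auto
  moreover have "{j\<in>F. c_endv C j \<in> c_verts C} = F" using endv_in Fsub by auto
  moreover have "{f\<in>c_edges C. c_dir C f \<noteq> 0 \<and> c_src C f \<in> c_verts C} = {f\<in>c_edges C. c_dir C f \<noteq> 0}"
    using ends by auto
  ultimately show ?thesis using DLc[of "c_edges C" x] unfolding reach_all[OF x] by simp
qed

lemma DL_side:
  assumes "e \<in> c_edges C"
  shows "2 * card {i\<in>{1..r+s}. c_mark C i \<in> side e u} + card {j\<in>F. c_endv C j \<in> side e u}
     \<le> 2 + card {f\<in>c_edges C - {e}. c_dir C f \<noteq> 0 \<and> c_src C f \<in> side e u}"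
  unfolding side_def by (rule DLc) auto

lemma edges_at_split: "card (edges_at C v) = card {f\<in>c_edges C. c_src C f = v} + card {f\<in>c_edges C. c_tgt C f = v}"
proof -
  have "edges_at C v = {f\<in>c_edges C. c_src C f = v} \<union> {f\<in>c_edges C. c_tgt C f = v}"
    by (auto simp: edges_at_def)
  moreover have "{f\<in>c_edges C. c_src C f = v} \<inter> {f\<in>c_edges C. c_tgt C f = v} = {}" using ends by auto
  ultimately show ?thesis using finE by (simp add: card_Un_disjoint)
qed

lemma sum_edges_at: "finite W \<Longrightarrow>
  (\<Sum>v\<in>W. card (edges_at C v)) = card {f\<in>c_edges C. c_src C f \<in> W} + card {f\<in>c_edges C. c_tgt C f \<in> W}"
  unfolding edges_at_split sum.distrib
  using card_fiber_sum[OF finE, of W "c_src C"] card_fiber_sum[OF finE, of W "c_tgt C"] by simp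

lemma sum_marks: "finite W \<Longrightarrow> (\<Sum>v\<in>W. card (marks_at r s C v)) = card {i\<in>{1..r+s}. c_mark C i \<in> W}"
  unfolding marks_at_def by (rule card_fiber_sum) auto

lemma sum_ends: "finite W \<Longrightarrow> (\<Sum>v\<in>W. card (ends_at \<Delta> C v)) = card {j\<in>{1..length \<Delta>}. c_endv C j \<in> W}"
  unfolding ends_at_def by (rule card_fiber_sum) auto

lemma sum_endsF: "finite W \<Longrightarrow> (\<Sum>v\<in>W. card {j\<in>ends_at \<Delta> C v. j \<in> F}) = card {j\<in>F. c_endv C j \<in> W}"
proof -
  assume W: "finite W"
  have "{j\<in>ends_at \<Delta> C v. j \<in> F} = {j\<in>F. c_endv C j = v}" for v
    using Fsub by (auto simp: ends_at_def)
  then show ?thesis using card_fiber_sum[OF finF W] by simp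
qed

end


definition gval :: "nat \<Rightarrow> nat \<Rightarrow> (int \<times> int) list \<Rightarrow> nat set \<Rightarrow> curve \<Rightarrow> nat \<Rightarrow> int" where
  "gval r s \<Delta> F C v = 4 - int (card (edges_at C v)) - 4 * int (card (marks_at r s C v))
     - 2 * int (card {j\<in>ends_at \<Delta> C v. j \<in> F})"

context bc
begin

lemma fin_edges_at: "finite (edges_at C v)" using finE by (simp add: edges_at_def)
lemma fin_ends_at: "finite (ends_at \<Delta> C v)" by (simp add: ends_at_def)
lemma fin_marks_at: "finite (marks_at r s C v)" by (simp add: marks_at_def)

lemma head_tail_at:
  assumes "f \<in> edges_at C v"
  shows "e_head C ori f = v \<longleftrightarrow> e_tail C ori f \<noteq> v"
  using assms ends by (auto simp: edges_at_def e_head_def e_tail_def)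

lemma count_split:
  assumes "X \<subseteq> edges_at C v"
  shows "card {f\<in>X. e_head C ori f = v} + card {f\<in>X. e_tail C ori f = v} = card X"
proof -
  have finX: "finite X" using assms fin_edges_at finite_subset by blast
  have "X = {f\<in>X. e_head C ori f = v} \<union> {f\<in>X. e_tail C ori f = v}"
    using head_tail_at assms by blast
  moreover have "{f\<in>X. e_head C ori f = v} \<inter> {f\<in>X. e_tail C ori f = v} = {}"
    using head_tail_at assms by blast
  ultimately show ?thesis using finX card_Un_disjoint
    by (metis (no_types, lifting) finite_Un)
qed

lemma ends_split:
  "card {j\<in>ends_at \<Delta> C v. snd ori j} + card {j\<in>ends_at \<Delta> C v. \<not> snd ori j} = card (ends_at \<Delta> C v)"
proof -
  have "ends_at \<Delta> C v = {j\<in>ends_at \<Delta> C v. snd ori j} \<union> {j\<in>ends_at \<Delta> C v. \<not> snd ori j}" by auto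
  then show ?thesis using fin_ends_at card_Un_disjoint
    by (metis (no_types, lifting) disjoint_iff finite_Un mem_Collect_eq)
qed

lemma fixed_iff:
  assumes "fixed_ends \<Delta> ori = F" "j \<in> ends_at \<Delta> C v"
  shows "snd ori j \<longleftrightarrow> j \<in> F"
  using assms by (auto simp: fixed_ends_def ends_at_def)

lemma dflow_eq:
  "dflow (e_head C ori) v = int (card {f\<in>edges_at C v. e_head C ori f = v}) - int (card {f\<in>edges_at C v. e_tail C ori f = v})"
proof -
  have "{f\<in>c_edges C. e_head C ori f = v} = {f\<in>edges_at C v. e_head C ori f = v}"
    by (auto simp: edges_at_def e_head_def)
  moreover have "{f\<in>c_edges C. (c_src C f = v \<or> c_tgt C f = v) \<and> e_head C ori f \<noteq> v} = {f\<in>edges_at C v. e_tail C ori f = v}"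
    using ends by (auto simp: edges_at_def e_head_def e_tail_def)
  ultimately show ?thesis by (simp add: dflow_def)
qed

lemma num_in_out:
  "num_in \<Delta> C ori v + num_out \<Delta> C ori v = num_nc \<Delta> C v"
  using count_split[of "nc_edges_at C v" v ori] ends_split[of v ori]
  unfolding num_in_def num_out_def num_nc_def nc_edges_at_def by auto

lemma nc_sub: "nc_edges_at C v \<subseteq> edges_at C v" by (auto simp: nc_edges_at_def)

lemma valence_eq: "valence r s \<Delta> C v = card (edges_at C v) + card (marks_at r s C v) + card (ends_at \<Delta> C v)"
  by (simp add: valence_def)

lemma part1:
  assumes OB: "oriented_broccoli r s \<Delta> C ori" and fe: "fixed_ends \<Delta> ori = F"
  shows "unoriented_broccoli r s \<Delta> C" "\<forall>f\<in>c_edges C. c_dir C f \<noteq> 0"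
    "\<forall>v\<in>c_verts C. dflow (e_head C ori) v = gval r s \<Delta> F C v"
proof -
  have typeII_nc: "nc_edges_at C v = edges_at C v"
    if "marks_at r s C v = {}" "valence r s \<Delta> C v = 3" "num_in \<Delta> C ori v = 2" "num_out \<Delta> C ori v = 1" for v
  proof -
    have "card (nc_edges_at C v) + card (ends_at \<Delta> C v) = 3"
      using num_in_out[of ori v] that by (simp add: num_nc_def)
    moreover have "card (edges_at C v) + card (ends_at \<Delta> C v) = 3" using that by (simp add: valence_def)
    ultimately have "card (nc_edges_at C v) = card (edges_at C v)" by simp
    then show ?thesis using nc_sub fin_edges_at by (simp add: card_subset_eq)
  qed
  have vt: "\<And>v. v \<in> c_verts C \<Longrightarrow>
        ((\<exists>i \<in> {1..r}. c_mark C i = v) \<and> num_nc \<Delta> C v = 2 \<and> all_outgoing \<Delta> C ori v) \<or>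
        (marks_at r s C v = {} \<and> valence r s \<Delta> C v = 3 \<and> num_in \<Delta> C ori v = 2 \<and> num_out \<Delta> C ori v = 1) \<or>
        ((\<exists>i \<in> {r+1..r+s}. c_mark C i = v) \<and> num_nc \<Delta> C v = 3 \<and> all_outgoing \<Delta> C ori v)"
    using OB unfolding oriented_broccoli_def by blast
  have marked_or_nc: "marks_at r s C v \<noteq> {} \<or> nc_edges_at C v = edges_at C v" if "v \<in> c_verts C" for v
  proof -
    have mi: "i \<in> {1..r+s} \<Longrightarrow> c_mark C i = v \<Longrightarrow> marks_at r s C v \<noteq> {}" for i
      by (auto simp: marks_at_def)
    have "(\<exists>i \<in> {1..r}. c_mark C i = v) \<or> (\<exists>i \<in> {r+1..r+s}. c_mark C i = v) \<Longrightarrow> marks_at r s C v \<noteq> {}"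
    proof (elim disjE bexE)
      fix i assume "i \<in> {1..r}" "c_mark C i = v"
      then show ?thesis using mi[of i] by auto
    next
      fix i assume "i \<in> {r+1..r+s}" "c_mark C i = v"
      then show ?thesis using mi[of i] by auto
    qed
    then show ?thesis using vt[OF that] typeII_nc by blast
  qed
  show nc: "\<forall>f\<in>c_edges C. c_dir C f \<noteq> 0"
  proof (rule ballI, rule ccontr)
    fix f assume f: "f \<in> c_edges C" and "\<not> c_dir C f \<noteq> 0"
    then have d0: "c_dir C f = 0" by simp
    have "f \<in> edges_at C (c_src C f)" "f \<in> edges_at C (c_tgt C f)" "f \<notin> nc_edges_at C (c_src C f)" "f \<notin> nc_edges_at C (c_tgt C f)"
      using f d0 by (auto simp: edges_at_def nc_edges_at_def)
    then have "marks_at r s C (c_src C f) \<noteq> {}" "marks_at r s C (c_tgt C f) \<noteq> {}"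
      using marked_or_nc ends f by blast+
    then show False using no_contr_marked[OF f d0] by blast
  qed
  have nce: "nc_edges_at C v = edges_at C v" for v
    using nc by (auto simp: nc_edges_at_def edges_at_def)
  have m1: "marks_at r s C v = {i}" if "i \<in> {1..r+s}" "c_mark C i = v" for i v
  proof -
    have "i \<in> marks_at r s C v" using that by (simp add: marks_at_def)
    moreover have "card (marks_at r s C v) \<le> 1" by (rule marks_le1)
    ultimately show ?thesis using fin_marks_at card_le_Suc0_iff_eq[of "marks_at r s C v"] by auto
  qed
  let ?a = "\<lambda>v. card {f\<in>edges_at C v. e_head C ori f = v}"
  let ?b = "\<lambda>v. card {f\<in>edges_at C v. e_tail C ori f = v}"
  let ?ie = "\<lambda>v. card {j\<in>ends_at \<Delta> C v. snd ori j}"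
  let ?oe = "\<lambda>v. card {j\<in>ends_at \<Delta> C v. \<not> snd ori j}"
  have ab: "?a v + ?b v = card (edges_at C v)" for v using count_split[of "edges_at C v" v ori] by simp
  have io: "?ie v + ?oe v = card (ends_at \<Delta> C v)" for v using ends_split[of v ori] .
  have ieF: "{j\<in>ends_at \<Delta> C v. snd ori j} = {j\<in>ends_at \<Delta> C v. j \<in> F}" for v
    using fixed_iff[OF fe] by blast
  have allout: "?a v = 0 \<and> ?ie v = 0" if "all_outgoing \<Delta> C ori v" for v
  proof -
    have "{f\<in>edges_at C v. e_head C ori f = v} = {}"
      using that head_tail_at unfolding all_outgoing_def nce by blast
    moreover have "{j\<in>ends_at \<Delta> C v. snd ori j} = {}" using that unfolding all_outgoing_def by blast
    ultimately show ?thesis by (metis card.empty)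
  qed
  have "\<forall>v\<in>c_verts C.
        (valence r s \<Delta> C v = 3 \<and> (\<exists>i \<in> {1..r}. c_mark C i = v)) \<or>
        (valence r s \<Delta> C v = 3 \<and> marks_at r s C v = {}) \<or>
        (valence r s \<Delta> C v = 4 \<and> (\<exists>i \<in> {r+1..r+s}. c_mark C i = v))"
  proof
    fix v assume v: "v \<in> c_verts C"
    from vt[OF v] show "(valence r s \<Delta> C v = 3 \<and> (\<exists>i \<in> {1..r}. c_mark C i = v)) \<or>
        (valence r s \<Delta> C v = 3 \<and> marks_at r s C v = {}) \<or>
        (valence r s \<Delta> C v = 4 \<and> (\<exists>i \<in> {r+1..r+s}. c_mark C i = v))"
    proof (elim disjE conjE)
      assume a: "\<exists>i \<in> {1..r}. c_mark C i = v" "num_nc \<Delta> C v = 2"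
      then obtain i where i: "i \<in> {1..r}" "c_mark C i = v" by blast
      then have "marks_at r s C v = {i}" using m1[of i v] by auto
      then have "valence r s \<Delta> C v = 3" using a(2) by (simp add: valence_def num_nc_def nce)
      then show ?thesis using a by blast
    next
      assume "marks_at r s C v = {}" "valence r s \<Delta> C v = 3" then show ?thesis by simp
    next
      assume a: "\<exists>i \<in> {r+1..r+s}. c_mark C i = v" "num_nc \<Delta> C v = 3"
      then obtain i where i: "i \<in> {r+1..r+s}" "c_mark C i = v" by blast
      then have "marks_at r s C v = {i}" using m1[of i v] by auto
      then have "valence r s \<Delta> C v = 4" using a(2) by (simp add: valence_def num_nc_def nce)
      then show ?thesis using a by blast
    qed
  qed
  then show "unoriented_broccoli r s \<Delta> C" by (simp add: unoriented_broccoli_def)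
  show "\<forall>v\<in>c_verts C. dflow (e_head C ori) v = gval r s \<Delta> F C v"
  proof
    fix v assume v: "v \<in> c_verts C"
    have dv: "dflow (e_head C ori) v = int (?a v) - int (?b v)" by (rule dflow_eq)
    from vt[OF v] show "dflow (e_head C ori) v = gval r s \<Delta> F C v"
    proof (elim disjE conjE)
      assume a: "\<exists>i \<in> {1..r}. c_mark C i = v" "all_outgoing \<Delta> C ori v"
      then obtain i where i: "i \<in> {1..r}" "c_mark C i = v" by blast
      then have "marks_at r s C v = {i}" using m1[of i v] by auto
      then have "card (marks_at r s C v) = 1" "?a v = 0" "?ie v = 0" using allout[OF a(2)] by auto
      then show ?thesis using dv ab[of v] unfolding gval_def ieF by simp
    next
      assume "marks_at r s C v = {}" "num_in \<Delta> C ori v = 2" "num_out \<Delta> C ori v = 1"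
      then show ?thesis using dv ab[of v] io[of v]
        unfolding gval_def ieF num_in_def num_out_def nce by simp
    next
      assume a: "\<exists>i \<in> {r+1..r+s}. c_mark C i = v" "all_outgoing \<Delta> C ori v"
      then obtain i where i: "i \<in> {r+1..r+s}" "c_mark C i = v" by blast
      then have "marks_at r s C v = {i}" using m1[of i v] by auto
      then have "card (marks_at r s C v) = 1" "?a v = 0" "?ie v = 0" using allout[OF a(2)] by auto
      then show ?thesis using dv ab[of v] unfolding gval_def ieF by simp
    qed
  qed
qed

end


context bc
begin

lemma marks_single:
  assumes "i \<in> {1..r+s}" "c_mark C i = v" shows "marks_at r s C v = {i}"
proof -
  have "i \<in> marks_at r s C v" using assms by (simp add: marks_at_def)
  moreover have "card (marks_at r s C v) \<le> 1" by (rule marks_le1)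
  ultimately show ?thesis using fin_marks_at card_le_Suc0_iff_eq[of "marks_at r s C v"] by auto
qed

lemma sum_g:
  assumes W: "finite W"
  shows "(\<Sum>v\<in>W. gval r s \<Delta> F C v) = 4 * int (card W) - int (card {f\<in>c_edges C. c_src C f \<in> W})
     - int (card {f\<in>c_edges C. c_tgt C f \<in> W}) - 4 * int (card {i\<in>{1..r+s}. c_mark C i \<in> W})
     - 2 * int (card {j\<in>F. c_endv C j \<in> W})"
proof -
  have e: "(\<Sum>v\<in>W. int (card (edges_at C v))) = int (card {f\<in>c_edges C. c_src C f \<in> W}) + int (card {f\<in>c_edges C. c_tgt C f \<in> W})"
  proof -
    have "(\<Sum>v\<in>W. int (card (edges_at C v))) = int (\<Sum>v\<in>W. card (edges_at C v))" by (rule of_nat_sum[symmetric])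
    also have "\<dots> = int (card {f\<in>c_edges C. c_src C f \<in> W} + card {f\<in>c_edges C. c_tgt C f \<in> W})"
      by (rule arg_cong[where f=int], rule sum_edges_at[OF W])
    finally show ?thesis by simp
  qed
  have m: "(\<Sum>v\<in>W. int (card (marks_at r s C v))) = int (card {i\<in>{1..r+s}. c_mark C i \<in> W})"
  proof -
    have "(\<Sum>v\<in>W. int (card (marks_at r s C v))) = int (\<Sum>v\<in>W. card (marks_at r s C v))" by (rule of_nat_sum[symmetric])
    also have "\<dots> = int (card {i\<in>{1..r+s}. c_mark C i \<in> W})"
      by (rule arg_cong[where f=int], rule sum_marks[OF W])
    finally show ?thesis .
  qed
  have f: "(\<Sum>v\<in>W. int (card {j\<in>ends_at \<Delta> C v. j \<in> F})) = int (card {j\<in>F. c_endv C j \<in> W})"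
  proof -
    have "(\<Sum>v\<in>W. int (card {j\<in>ends_at \<Delta> C v. j \<in> F})) = int (\<Sum>v\<in>W. card {j\<in>ends_at \<Delta> C v. j \<in> F})" by (rule of_nat_sum[symmetric])
    also have "\<dots> = int (card {j\<in>F. c_endv C j \<in> W})"
      by (rule arg_cong[where f=int], rule sum_endsF[OF W])
    finally show ?thesis .
  qed
  have "(\<Sum>v\<in>W. gval r s \<Delta> F C v) = (\<Sum>v\<in>W. 4) - (\<Sum>v\<in>W. int (card (edges_at C v)))
      - (\<Sum>v\<in>W. 4 * int (card (marks_at r s C v))) - (\<Sum>v\<in>W. 2 * int (card {j\<in>ends_at \<Delta> C v. j \<in> F}))"
    unfolding gval_def by (simp only: sum_subtractf)
  also have "(\<Sum>v\<in>W. 4 * int (card (marks_at r s C v))) = 4 * (\<Sum>v\<in>W. int (card (marks_at r s C v)))"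
    by (rule sum_distrib_left[symmetric])
  also have "(\<Sum>v\<in>W. 2 * int (card {j\<in>ends_at \<Delta> C v. j \<in> F})) = 2 * (\<Sum>v\<in>W. int (card {j\<in>ends_at \<Delta> C v. j \<in> F}))"
    by (rule sum_distrib_left[symmetric])
  also have "(\<Sum>v\<in>W. (4::int)) = 4 * int (card W)" by simp
  finally show ?thesis unfolding e m f by simp
qed

lemma side_edge_counts:
  assumes e: "e \<in> c_edges C" and u: "u = c_src C e \<or> u = c_tgt C e"
  shows "card {f\<in>c_edges C. c_src C f \<in> side e u} + card {f\<in>c_edges C. c_tgt C f \<in> side e u}
        = 2 * card {f\<in>c_edges C - {e}. c_src C f \<in> side e u} + 1"
proof -
  let ?T = "side e u" and ?I = "{f\<in>c_edges C - {e}. c_src C f \<in> side e u}"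
  have oT: "oth (c_src C) (c_tgt C) e u \<notin> ?T"
  proof -
    have "side e u \<inter> side e (oth (c_src C) (c_tgt C) e u) = {}"
      using side_disj[OF e] u ends e by (auto simp: oth_def Int_commute)
    then show ?thesis using side_self[of "oth (c_src C) (c_tgt C) e u" e] by blast
  qed
  have one: "(c_src C e \<in> ?T \<and> c_tgt C e \<notin> ?T) \<or> (c_src C e \<notin> ?T \<and> c_tgt C e \<in> ?T)"
    using oT u ends e by (auto simp: oth_def split: if_splits)
  have s1: "{f\<in>c_edges C. c_src C f \<in> ?T} = ?I \<union> (if c_src C e \<in> ?T then {e} else {})"
    using e by auto
  have s2: "{f\<in>c_edges C. c_tgt C f \<in> ?T} = ?I \<union> (if c_tgt C e \<in> ?T then {e} else {})"
    using e side_closed[of _ e u] by auto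
  have finI: "finite ?I" using finE by auto
  show ?thesis unfolding s1 s2 using one finI by auto
qed

lemma part2:
  assumes UB: "unoriented_broccoli r s \<Delta> C" and cnt: "r + 2 * s + card F + 1 = length \<Delta>"
  shows "\<exists>ori. oriented_broccoli r s \<Delta> C ori \<and> fixed_ends \<Delta> ori = F"
proof -
  let ?V = "c_verts C" and ?E = "c_edges C"
  define cm where "cm v = card {i\<in>{r+1..r+s}. c_mark C i = v}" for v
  have vt: "\<And>v. v \<in> ?V \<Longrightarrow>
        (valence r s \<Delta> C v = 3 \<and> (\<exists>i \<in> {1..r}. c_mark C i = v)) \<or>
        (valence r s \<Delta> C v = 3 \<and> marks_at r s C v = {}) \<or>
        (valence r s \<Delta> C v = 4 \<and> (\<exists>i \<in> {r+1..r+s}. c_mark C i = v))"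
    using UB unfolding unoriented_broccoli_def by blast
  have val_cm: "valence r s \<Delta> C v = 3 + cm v" if v: "v \<in> ?V" for v
    using vt[OF v]
  proof (elim disjE conjE)
    assume a: "valence r s \<Delta> C v = 3" "\<exists>i \<in> {1..r}. c_mark C i = v"
    then obtain i where i: "i \<in> {1..r}" "c_mark C i = v" by blast
    then have "marks_at r s C v = {i}" using marks_single[of i v] by auto
    moreover have "{i'\<in>{r+1..r+s}. c_mark C i' = v} \<subseteq> marks_at r s C v" by (auto simp: marks_at_def)
    ultimately have "{i'\<in>{r+1..r+s}. c_mark C i' = v} \<subseteq> {i}" by simp
    then have "{i'\<in>{r+1..r+s}. c_mark C i' = v} = {}" using i by auto
    then show ?thesis using a by (simp add: cm_def)
  next
    assume a: "valence r s \<Delta> C v = 3" "marks_at r s C v = {}"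
    then have "{i\<in>{r+1..r+s}. c_mark C i = v} = {}" by (auto simp: marks_at_def)
    then show ?thesis using a by (simp add: cm_def)
  next
    assume a: "valence r s \<Delta> C v = 4" "\<exists>i \<in> {r+1..r+s}. c_mark C i = v"
    then obtain i where i: "i \<in> {r+1..r+s}" "c_mark C i = v" by blast
    then have "marks_at r s C v = {i}" using marks_single[of i v] by auto
    moreover have "{i'\<in>{r+1..r+s}. c_mark C i' = v} \<subseteq> marks_at r s C v" by (auto simp: marks_at_def)
    ultimately have "{i'\<in>{r+1..r+s}. c_mark C i' = v} \<subseteq> {i}" by simp
    moreover have "i \<in> {i'\<in>{r+1..r+s}. c_mark C i' = v}" using i by simp
    ultimately have "{i'\<in>{r+1..r+s}. c_mark C i' = v} = {i}" by blast
    then show ?thesis using a by (simp add: cm_def)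
  qed
  have sum_cm: "(\<Sum>v\<in>?V. cm v) = s"
  proof -
    have "(\<Sum>v\<in>?V. cm v) = card {i\<in>{r+1..r+s}. c_mark C i \<in> ?V}"
      unfolding cm_def by (rule card_fiber_sum) (auto simp: finV)
    also have "{i\<in>{r+1..r+s}. c_mark C i \<in> ?V} = {r+1..r+s}" using marks_in by auto
    finally show ?thesis by simp
  qed
  have sumval1: "(\<Sum>v\<in>?V. valence r s \<Delta> C v) = 3 * card ?V + s"
    using sum_cm val_cm by (simp add: sum.distrib)
  have sumval2: "(\<Sum>v\<in>?V. valence r s \<Delta> C v) = 2 * card ?E + (r + s) + length \<Delta>"
  proof -
    have "{f\<in>?E. c_src C f \<in> ?V} = ?E" "{f\<in>?E. c_tgt C f \<in> ?V} = ?E" using ends by auto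
    moreover have "{i\<in>{1..r+s}. c_mark C i \<in> ?V} = {1..r+s}" using marks_in by auto
    moreover have "{j\<in>{1..length \<Delta>}. c_endv C j \<in> ?V} = {1..length \<Delta>}" using endv_in by auto
    ultimately show ?thesis
      unfolding valence_def sum.distrib using sum_edges_at[OF finV] sum_marks[OF finV] sum_ends[OF finV] by simp
  qed
  have EN: "card ?E + 2 = 2 * (r + s) + card F"
  proof -
    have X: "3 * card ?V + s = 2 * card ?E + (r + s) + length \<Delta>" using sumval1 sumval2 by simp
    show ?thesis using X cardVE cnt by presburger
  qed
  have allnc: "\<forall>f\<in>?E. c_dir C f \<noteq> 0"
  proof -
    have "card {f\<in>?E. c_dir C f \<noteq> 0} \<ge> card ?E" using DL_global EN by linarith
    moreover have "{f\<in>?E. c_dir C f \<noteq> 0} \<subseteq> ?E" by auto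
    ultimately have "{f\<in>?E. c_dir C f \<noteq> 0} = ?E" using finE
      by (metis (no_types, lifting) card_seteq)
    then show ?thesis by blast
  qed
  define g where "g v = gval r s \<Delta> F C v" for v
  have totg: "(\<Sum>v\<in>?V. g v) = 0"
  proof -
    have "{f\<in>?E. c_src C f \<in> ?V} = ?E" "{f\<in>?E. c_tgt C f \<in> ?V} = ?E" using ends by auto
    moreover have "{i\<in>{1..r+s}. c_mark C i \<in> ?V} = {1..r+s}" using marks_in by auto
    moreover have "{j\<in>F. c_endv C j \<in> ?V} = F" using endv_in Fsub by auto
    ultimately show ?thesis unfolding g_def sum_g[OF finV] using EN cardVE by simp
  qed
  have sideg: "(\<Sum>v\<in>side e u. g v) \<ge> -1 \<and> odd (\<Sum>v\<in>side e u. g v)"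
    if e: "e \<in> ?E" and u: "u = c_src C e \<or> u = c_tgt C e" for e u
  proof -
    let ?T = "side e u" and ?I = "{f\<in>c_edges C - {e}. c_src C f \<in> side e u}"
    have cT: "card ?T = card ?I + 1" by (rule side_card[OF e u])
    have ce: "card {f\<in>c_edges C. c_src C f \<in> ?T} + card {f\<in>c_edges C. c_tgt C f \<in> ?T} = 2 * card ?I + 1"
      by (rule side_edge_counts[OF e u])
    have dl: "2 * card {i\<in>{1..r+s}. c_mark C i \<in> ?T} + card {j\<in>F. c_endv C j \<in> ?T}
     \<le> 2 + card {f\<in>c_edges C - {e}. c_dir C f \<noteq> 0 \<and> c_src C f \<in> ?T}" by (rule DL_side[OF e])
    have "{f\<in>c_edges C - {e}. c_dir C f \<noteq> 0 \<and> c_src C f \<in> ?T} = ?I" using allnc by auto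
    then have dl': "2 * card {i\<in>{1..r+s}. c_mark C i \<in> ?T} + card {j\<in>F. c_endv C j \<in> ?T} \<le> 2 + card ?I"
      using dl by simp
    have sg: "(\<Sum>v\<in>?T. g v) = 4 * int (card ?T) - int (card {f\<in>c_edges C. c_src C f \<in> ?T})
     - int (card {f\<in>c_edges C. c_tgt C f \<in> ?T}) - 4 * int (card {i\<in>{1..r+s}. c_mark C i \<in> ?T})
     - 2 * int (card {j\<in>F. c_endv C j \<in> ?T})"
      unfolding g_def by (rule sum_g[OF side_fin])
    define m where "m = card {i\<in>{1..r+s}. c_mark C i \<in> ?T}"
    define fT where "fT = card {j\<in>F. c_endv C j \<in> ?T}"
    have ce': "int (card {f\<in>c_edges C. c_src C f \<in> ?T}) + int (card {f\<in>c_edges C. c_tgt C f \<in> ?T}) = 2 * int (card ?I) + 1"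
      using ce by (metis (no_types, lifting) of_nat_add of_nat_1 of_nat_mult of_nat_numeral)
    have X: "(\<Sum>v\<in>?T. g v) = 2 * int (card ?I) + 3 - 4 * int m - 2 * int fT"
      using sg cT ce' unfolding m_def fT_def by simp
    have dl2: "2 * int m + int fT \<le> 2 + int (card ?I)" using dl' unfolding m_def fT_def by linarith
    have X2: "(\<Sum>v\<in>?T. g v) = 2 * (int (card ?I) + 1 - 2 * int m - int fT) + 1"
      using X by (simp add: algebra_simps)
    have "(\<Sum>v\<in>?T. g v) \<ge> -1" using X dl2 by linarith
    moreover have "odd (\<Sum>v\<in>?T. g v)" unfolding X2 by simp
    ultimately show ?thesis by blast
  qed
  have pm: "\<forall>e\<in>?E. (\<Sum>v\<in>side e (c_tgt C e). g v) = 1 \<or> (\<Sum>v\<in>side e (c_tgt C e). g v) = -1"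
  proof
    fix e assume e: "e \<in> ?E"
    have a: "(\<Sum>v\<in>side e (c_src C e). g v) + (\<Sum>v\<in>side e (c_tgt C e). g v) = 0"
      using side_sum_split[OF e, of g] totg by simp
    have b: "(\<Sum>v\<in>side e (c_src C e). g v) \<ge> -1" using sideg[OF e] by blast
    have c: "(\<Sum>v\<in>side e (c_tgt C e). g v) \<ge> -1 \<and> odd (\<Sum>v\<in>side e (c_tgt C e). g v)" using sideg[OF e] by blast
    show "(\<Sum>v\<in>side e (c_tgt C e). g v) = 1 \<or> (\<Sum>v\<in>side e (c_tgt C e). g v) = -1"
    proof -
      let ?X = "(\<Sum>v\<in>side e (c_tgt C e). g v)"
      have "?X \<le> 1" using a b by linarith
      moreover have "?X \<noteq> 0" using c by auto
      ultimately show ?thesis using c by linarith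
    qed
  qed
  define h where "h e = (if (\<Sum>v\<in>side e (c_tgt C e). g v) = 1 then c_tgt C e else c_src C e)" for e
  have fl: "dflow h v = g v" if "v \<in> ?V" for v
    by (rule flow_construct[OF totg pm h_def that])
  define ori :: orientation where "ori = (\<lambda>f. h f = c_tgt C f, \<lambda>j. j \<in> F)"
  have hd: "e_head C ori f = h f" for f
    by (auto simp: ori_def e_head_def h_def)
  have fe: "fixed_ends \<Delta> ori = F" using Fsub by (auto simp: fixed_ends_def ori_def)
  have nce: "nc_edges_at C v = edges_at C v" for v
    using allnc by (auto simp: nc_edges_at_def edges_at_def)
  let ?a = "\<lambda>v. card {f\<in>edges_at C v. e_head C ori f = v}"
  let ?b = "\<lambda>v. card {f\<in>edges_at C v. e_tail C ori f = v}"
  let ?ie = "\<lambda>v. card {j\<in>ends_at \<Delta> C v. snd ori j}"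
  let ?oe = "\<lambda>v. card {j\<in>ends_at \<Delta> C v. \<not> snd ori j}"
  have ab: "?a v + ?b v = card (edges_at C v)" for v using count_split[of "edges_at C v" v ori] by simp
  have io: "?ie v + ?oe v = card (ends_at \<Delta> C v)" for v using ends_split[of v ori] .
  have ieF: "{j\<in>ends_at \<Delta> C v. snd ori j} = {j\<in>ends_at \<Delta> C v. j \<in> F}" for v
    by (auto simp: ori_def)
  have dg: "int (?a v) - int (?b v) = g v" if "v \<in> ?V" for v
    using fl[OF that] dflow_eq[of ori v] unfolding hd[abs_def] by simp
  have allout: "all_outgoing \<Delta> C ori v" if "?a v = 0" "?ie v = 0" for v
  proof -
    have "{f\<in>edges_at C v. e_head C ori f = v} = {}" using that(1) fin_edges_at by simp
    moreover have "{j\<in>ends_at \<Delta> C v. snd ori j} = {}" using that(2) fin_ends_at by simp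
    ultimately show ?thesis unfolding all_outgoing_def nce using head_tail_at by blast
  qed
  have "oriented_broccoli r s \<Delta> C ori"
    unfolding oriented_broccoli_def
  proof
    fix v assume v: "v \<in> ?V"
    have dv: "int (?a v) - int (?b v) = g v" by (rule dg[OF v])
    from vt[OF v] show "((\<exists>i \<in> {1..r}. c_mark C i = v) \<and> num_nc \<Delta> C v = 2 \<and> all_outgoing \<Delta> C ori v) \<or>
        (marks_at r s C v = {} \<and> valence r s \<Delta> C v = 3 \<and>
           num_in \<Delta> C ori v = 2 \<and> num_out \<Delta> C ori v = 1) \<or>
        ((\<exists>i \<in> {r+1..r+s}. c_mark C i = v) \<and> num_nc \<Delta> C v = 3 \<and> all_outgoing \<Delta> C ori v)"
    proof (elim disjE conjE)
      assume a: "valence r s \<Delta> C v = 3" "\<exists>i \<in> {1..r}. c_mark C i = v"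
      then obtain i where i: "i \<in> {1..r}" "c_mark C i = v" by blast
      then have m: "marks_at r s C v = {i}" using marks_single[of i v] by auto
      have "card (edges_at C v) + card (ends_at \<Delta> C v) = 2" using a m by (simp add: valence_def)
      moreover have "?a v = 0 \<and> ?ie v = 0" using dv m ab[of v] unfolding g_def gval_def ieF[symmetric] by simp
      ultimately show ?thesis using a allout by (simp add: num_nc_def nce)
    next
      assume a: "valence r s \<Delta> C v = 3" "marks_at r s C v = {}"
      have "card (edges_at C v) + card (ends_at \<Delta> C v) = 3" using a by (simp add: valence_def)
      then have "num_in \<Delta> C ori v = 2 \<and> num_out \<Delta> C ori v = 1"
        using dv a ab[of v] io[of v] unfolding g_def gval_def ieF[symmetric] num_in_def num_out_def nce by simp
      then show ?thesis using a by simp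
    next
      assume a: "valence r s \<Delta> C v = 4" "\<exists>i \<in> {r+1..r+s}. c_mark C i = v"
      then obtain i where i: "i \<in> {r+1..r+s}" "c_mark C i = v" by blast
      then have m: "marks_at r s C v = {i}" using marks_single[of i v] by auto
      have "card (edges_at C v) + card (ends_at \<Delta> C v) = 3" using a m by (simp add: valence_def)
      moreover have "?a v = 0 \<and> ?ie v = 0" using dv m ab[of v] unfolding g_def gval_def ieF[symmetric] by simp
      ultimately show ?thesis using a allout by (simp add: num_nc_def nce)
    qed
  qed
  then show ?thesis using fe by blast
qed

end


context tree
begin

lemma head_unique:
  assumes h1: "\<forall>f\<in>E. h1 f = sr f \<or> h1 f = tg f" and h2: "\<forall>f\<in>E. h2 f = sr f \<or> h2 f = tg f"
    and eq: "\<forall>v\<in>V. dflow h1 v = dflow h2 v" and f: "f \<in> E"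
  shows "h1 f = h2 f"
proof -
  have sub: "side f (tg f) \<subseteq> V" using side_sub ends f by auto
  have "(\<Sum>v\<in>side f (tg f). dflow h1 v) = (\<Sum>v\<in>side f (tg f). dflow h2 v)"
    using eq sub by (intro sum.cong) auto
  then have "(if h1 f = tg f then 1 else -1 :: int) = (if h2 f = tg f then 1 else -1)"
    using HQ[OF h1 f, of "tg f"] HQ[OF h2 f, of "tg f"] by simp
  then have "h1 f = tg f \<longleftrightarrow> h2 f = tg f" by (auto split: if_splits)
  then show ?thesis using h1 h2 f by metis
qed

end

lemma gm_ends:
  assumes gm: "graph_match r s \<Delta> C D \<phi> \<psi>" and f: "f \<in> c_edges C"
  shows "{c_src D (\<psi> f), c_tgt D (\<psi> f)} = {\<phi> (c_src C f), \<phi> (c_tgt C f)}"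
  using gm f unfolding graph_match_def by auto

lemma part3:
  assumes bcC: "bc r s \<Delta> F P C" and bcD: "bc r s \<Delta> F P D"
    and OC: "OrBroc r s \<Delta> F P C ori" and OD: "OrBroc r s \<Delta> F P D ori'"
    and iso: "curve_iso r s \<Delta> C D"
  shows "or_iso r s \<Delta> C ori D ori'"
proof -
  interpret Cb: bc r s \<Delta> F P C by (rule bcC)
  interpret Db: bc r s \<Delta> F P D by (rule bcD)
  obtain \<phi> \<psi> where gm: "graph_match r s \<Delta> C D \<phi> \<psi>"
    and len: "\<forall>e \<in> c_edges C. c_len D (\<psi> e) = c_len C e"
    and pos: "\<forall>v \<in> c_verts C. c_pos D (\<phi> v) = c_pos C v"
    using iso unfolding curve_iso_def by blast
  have bphi: "bij_betw \<phi> (c_verts C) (c_verts D)" and bpsi: "bij_betw \<psi> (c_edges C) (c_edges D)"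
    using gm unfolding graph_match_def by auto
  have injphi: "inj_on \<phi> (c_verts C)" using bphi by (rule bij_betw_imp_inj_on)
  have injpsi: "inj_on \<psi> (c_edges C)" using bpsi by (rule bij_betw_imp_inj_on)
  have imE: "\<psi> ` c_edges C = c_edges D" using bpsi by (rule bij_betw_imp_surj_on)
  have imV: "\<phi> ` c_verts C = c_verts D" using bphi by (rule bij_betw_imp_surj_on)
  have obC: "oriented_broccoli r s \<Delta> C ori" and feC: "fixed_ends \<Delta> ori = F"
    using OC unfolding OrBroc_def by simp_all
  have obD: "oriented_broccoli r s \<Delta> D ori'" and feD: "fixed_ends \<Delta> ori' = F"
    using OD unfolding OrBroc_def by simp_all
  have p1C: "\<forall>v\<in>c_verts C. Cb.dflow (e_head C ori) v = gval r s \<Delta> F C v"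
    by (rule Cb.part1(3)[OF obC feC])
  have p1D: "\<forall>v\<in>c_verts D. Db.dflow (e_head D ori') v = gval r s \<Delta> F D v"
    by (rule Db.part1(3)[OF obD feD])
  define h'' where "h'' f = (if e_head D ori' (\<psi> f) = \<phi> (c_tgt C f) then c_tgt C f else c_src C f)" for f
  have hD_end: "e_head D ori' g = c_src D g \<or> e_head D ori' g = c_tgt D g" for g
    by (auto simp: e_head_def)
  have hh: "e_head D ori' (\<psi> f) = \<phi> (h'' f)" if f: "f \<in> c_edges C" for f
  proof -
    have "e_head D ori' (\<psi> f) \<in> {\<phi> (c_src C f), \<phi> (c_tgt C f)}"
      using gm_ends[OF gm f] hD_end[of "\<psi> f"] by auto
    then show ?thesis by (auto simp: h''_def)
  qed
  have h''_end: "\<forall>f\<in>c_edges C. h'' f = c_src C f \<or> h'' f = c_tgt C f" by (auto simp: h''_def)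
  have hC_end: "\<forall>f\<in>c_edges C. e_head C ori f = c_src C f \<or> e_head C ori f = c_tgt C f"
    by (auto simp: e_head_def)
  have verts_ends: "c_src C f \<in> c_verts C \<and> c_tgt C f \<in> c_verts C" if "f \<in> c_edges C" for f
    using Cb.ends that by auto
  have phieq: "\<phi> a = \<phi> b \<longleftrightarrow> a = b" if "a \<in> c_verts C" "b \<in> c_verts C" for a b
    using injphi that inj_on_eq_iff by metis
  have cardmap: "card {g\<in>c_edges D. Q g} = card {f\<in>c_edges C. Q (\<psi> f)}" for Q
  proof -
    have "{g\<in>c_edges D. Q g} = \<psi> ` {f\<in>c_edges C. Q (\<psi> f)}" using imE by auto
    moreover have "inj_on \<psi> {f\<in>c_edges C. Q (\<psi> f)}" using injpsi by (rule inj_on_subset) auto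
    ultimately show ?thesis by (simp add: card_image)
  qed
  have endp: "(c_src D (\<psi> f) = \<phi> v \<or> c_tgt D (\<psi> f) = \<phi> v) \<longleftrightarrow> (c_src C f = v \<or> c_tgt C f = v)"
    if "f \<in> c_edges C" "v \<in> c_verts C" for f v
  proof -
    have "{c_src D (\<psi> f), c_tgt D (\<psi> f)} = {\<phi> (c_src C f), \<phi> (c_tgt C f)}" by (rule gm_ends[OF gm that(1)])
    then have "(c_src D (\<psi> f) = \<phi> v \<or> c_tgt D (\<psi> f) = \<phi> v) \<longleftrightarrow> (\<phi> (c_src C f) = \<phi> v \<or> \<phi> (c_tgt C f) = \<phi> v)"
      by (auto simp: doubleton_eq_iff)
    then show ?thesis using phieq verts_ends[OF that(1)] that(2) by auto
  qed
  have dtrans: "Cb.dflow h'' v = Db.dflow (e_head D ori') (\<phi> v)" if v: "v \<in> c_verts C" for v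
  proof -
    have key: "e_head D ori' (\<psi> f) = \<phi> v \<longleftrightarrow> h'' f = v" if f: "f \<in> c_edges C" for f
    proof -
      have "h'' f \<in> c_verts C" using h''_end verts_ends f by auto
      then show ?thesis using hh[OF f] phieq[of "h'' f" v] v by simp
    qed
    have a: "{f\<in>c_edges C. e_head D ori' (\<psi> f) = \<phi> v} = {f\<in>c_edges C. h'' f = v}"
      using key by blast
    have b: "{f\<in>c_edges C. (c_src D (\<psi> f) = \<phi> v \<or> c_tgt D (\<psi> f) = \<phi> v) \<and> e_head D ori' (\<psi> f) \<noteq> \<phi> v}
       = {f\<in>c_edges C. (c_src C f = v \<or> c_tgt C f = v) \<and> h'' f \<noteq> v}"
      using key endp[OF _ v] by blast
    show ?thesis unfolding Cb.dflow_def Db.dflow_def cardmap a b ..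
  qed
  have gtrans: "gval r s \<Delta> F D (\<phi> v) = gval r s \<Delta> F C v" if v: "v \<in> c_verts C" for v
  proof -
    have "{f\<in>c_edges C. c_src D (\<psi> f) = \<phi> v \<or> c_tgt D (\<psi> f) = \<phi> v} = {f\<in>c_edges C. c_src C f = v \<or> c_tgt C f = v}"
      using endp[OF _ v] by blast
    then have e: "card (edges_at D (\<phi> v)) = card (edges_at C v)"
      unfolding edges_at_def cardmap by simp
    have m: "marks_at r s D (\<phi> v) = marks_at r s C v"
    proof -
      have "c_mark D i = \<phi> (c_mark C i)" if "i \<in> {1..r+s}" for i using gm that unfolding graph_match_def by blast
      then show ?thesis unfolding marks_at_def using phieq Cb.marks_in v by auto
    qed
    have n: "ends_at \<Delta> D (\<phi> v) = ends_at \<Delta> C v"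
    proof -
      have "c_endv D j = \<phi> (c_endv C j)" if "j \<in> {1..length \<Delta>}" for j using gm that unfolding graph_match_def by blast
      then show ?thesis unfolding ends_at_def using phieq Cb.endv_in v by auto
    qed
    show ?thesis unfolding gval_def e m n ..
  qed
  have same: "\<forall>v\<in>c_verts C. Cb.dflow h'' v = Cb.dflow (e_head C ori) v"
  proof
    fix v assume v: "v \<in> c_verts C"
    have "\<phi> v \<in> c_verts D" using imV v by auto
    then show "Cb.dflow h'' v = Cb.dflow (e_head C ori) v"
      using dtrans[OF v] p1D gtrans[OF v] p1C v by auto
  qed
  have heads: "e_head D ori' (\<psi> e) = \<phi> (e_head C ori e)" if e: "e \<in> c_edges C" for e
    using hh[OF e] Cb.head_unique[OF h''_end hC_end same e] by simp
  have snds: "\<forall>j \<in> {1..length \<Delta>}. snd ori' j = snd ori j"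
    using feC feD unfolding fixed_ends_def by blast
  show ?thesis unfolding or_iso_def
    using gm len pos heads snds by blast
qed



theorem lemma3p14:
  fixes r s :: nat and \<Delta> :: "(int \<times> int) list" and F :: "nat set"
    and P :: "(nat \<Rightarrow> real \<times> real) \<times> (nat \<Rightarrow> real \<times> real)"
  assumes "\<forall>v \<in> set \<Delta>. v \<noteq> 0"
    and "F \<subseteq> {1..length \<Delta>}"
    and "r + 2 * s + card F + 1 = length \<Delta>"
    and "gen_pos r s \<Delta> F P"
  shows "(\<forall>C ori. OrBroc r s \<Delta> F P C ori \<longrightarrow> UnBroc r s \<Delta> F P C)
       \<and> (\<forall>C. UnBroc r s \<Delta> F P C \<longrightarrow> (\<exists>ori. OrBroc r s \<Delta> F P C ori))
       \<and> (\<forall>C ori D ori'. OrBroc r s \<Delta> F P C ori \<and> OrBroc r s \<Delta> F P D ori' \<and> curve_iso r s \<Delta> C D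
              \<longrightarrow> or_iso r s \<Delta> C ori D ori')"
proof -
  have mk: "bc r s \<Delta> F P C" if "is_curve r s \<Delta> C" "ev_eq r s \<Delta> F C P" for C
    using that assms(2,4) by (simp add: bc_def)
  have A: "\<forall>C ori. OrBroc r s \<Delta> F P C ori \<longrightarrow> UnBroc r s \<Delta> F P C"
  proof (intro allI impI)
    fix C ori assume O: "OrBroc r s \<Delta> F P C ori"
    then have c: "is_curve r s \<Delta> C" "ev_eq r s \<Delta> F C P" "oriented_broccoli r s \<Delta> C ori" "fixed_ends \<Delta> ori = F"
      by (simp_all add: OrBroc_def)
    interpret b: bc r s \<Delta> F P C by (rule mk[OF c(1,2)])
    show "UnBroc r s \<Delta> F P C" using b.part1(1)[OF c(3,4)] c by (simp add: UnBroc_def)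
  qed
  have B: "\<forall>C. UnBroc r s \<Delta> F P C \<longrightarrow> (\<exists>ori. OrBroc r s \<Delta> F P C ori)"
  proof (intro allI impI)
    fix C assume U: "UnBroc r s \<Delta> F P C"
    then have c: "is_curve r s \<Delta> C" "ev_eq r s \<Delta> F C P" "unoriented_broccoli r s \<Delta> C"
      by (simp_all add: UnBroc_def)
    interpret b: bc r s \<Delta> F P C by (rule mk[OF c(1,2)])
    obtain ori where o: "oriented_broccoli r s \<Delta> C ori" "fixed_ends \<Delta> ori = F"
      using b.part2[OF c(3) assms(3)] by blast
    have "OrBroc r s \<Delta> F P C ori" unfolding OrBroc_def using o c by blast
    then show "\<exists>ori. OrBroc r s \<Delta> F P C ori" by blast
  qed
  have Cc: "\<forall>C ori D ori'. OrBroc r s \<Delta> F P C ori \<and> OrBroc r s \<Delta> F P D ori' \<and> curve_iso r s \<Delta> C D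
              \<longrightarrow> or_iso r s \<Delta> C ori D ori'"
  proof (intro allI impI)
    fix C ori D ori' assume H: "OrBroc r s \<Delta> F P C ori \<and> OrBroc r s \<Delta> F P D ori' \<and> curve_iso r s \<Delta> C D"
    then have "bc r s \<Delta> F P C" "bc r s \<Delta> F P D" using mk by (auto simp: OrBroc_def)
    then show "or_iso r s \<Delta> C ori D ori'" using part3 H by blast
  qed
  show ?thesis using A B Cc by blast
qed

end
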